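(* Let $m,n\ge 3$. Let $K_m=U_{\{0,2\},m}(a,b,c)$, let $L_n=U_{\{1,3\},n}(b,a,c)$ if $n\ge 4$, and let $L_3=U_{\{1\},3}(b,a,c)$. Then the state complexities of $K_m^R\cup L_n^R$, $K_m^R\cap L_n^R$ and $K_m^R\setminus L_n^R$ are each $(2^m-1)(2^n-1)+1$, and the state complexity of $K_m^R\oplus L_n^R$ is $2^{m+n-1}$.
   Context: The state complexity of a regular language is the number of states of its minimal complete DFA. For $n\ge 3$, $\mathcal{U}_n(a,b,c)$ is the DFA over $\{a,b,c\}$ with states $\{0,\dots,n-1\}$, initial state $0$, where $a$ maps $i\mapsto i+1\pmod n$, $b$ swaps $0$ and $1$ fixing other states, and $c$ maps $n-1$ to $0$ fixing other states. $\mathcal{U}_n(b,a,c)$ is the same with the roles of $a$ and $b$ interchanged ($b$ is the cycle $i\mapsto i+1\pmod n$, $a$ swaps $0$ and $1$). For a set $F\subseteq\{0,\dots,n-1\}$, $U_{F,n}(a,b,c)$ (resp. $U_{F,n}(b,a,c)$) denotes the language accepted by $\mathcal{U}_n(a,b,c)$ (resp. $\mathcal{U}_n(b,a,c)$) with final state set $F$. $L^R$ is the reversal of $L$; $\setminus$ is set difference, $\oplus$ symmetric difference. *)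

theory Defs
  imports Main
begin

datatype sym = A | B | C

text \<open>Complete DFAs over the alphabet sym, with states drawn from nat
  (no loss of generality: any finite state set can be renamed into nat).\<close>
definition is_dfa :: "nat set \<Rightarrow> nat \<Rightarrow> (nat \<Rightarrow> sym \<Rightarrow> nat) \<Rightarrow> nat set \<Rightarrow> bool" where
  "is_dfa Q q0 d F \<longleftrightarrow> finite Q \<and> q0 \<in> Q \<and> (\<forall>q\<in>Q. \<forall>x. d q x \<in> Q) \<and> F \<subseteq> Q"

definition dfa_lang :: "nat \<Rightarrow> (nat \<Rightarrow> sym \<Rightarrow> nat) \<Rightarrow> nat set \<Rightarrow> sym list set" where
  "dfa_lang q0 d F = {w. foldl d q0 w \<in> F}"

definition sc :: "sym list set \<Rightarrow> nat" where
  "sc L = (LEAST k. \<exists>Q q0 d F. is_dfa Q q0 d F \<and> card Q = k \<and> dfa_lang q0 d F = L)"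

definition cyc :: "nat \<Rightarrow> nat \<Rightarrow> nat" where "cyc n q = (q + 1) mod n"
definition swp :: "nat \<Rightarrow> nat" where "swp q = (if q = 0 then 1 else if q = 1 then 0 else q)"
definition lastto0 :: "nat \<Rightarrow> nat \<Rightarrow> nat" where "lastto0 n q = (if q = n - 1 then 0 else q)"

fun U_abc :: "nat \<Rightarrow> nat \<Rightarrow> sym \<Rightarrow> nat" where
  "U_abc n q A = cyc n q"
| "U_abc n q B = swp q"
| "U_abc n q C = lastto0 n q"

fun U_bac :: "nat \<Rightarrow> nat \<Rightarrow> sym \<Rightarrow> nat" where
  "U_bac n q A = swp q"
| "U_bac n q B = cyc n q"
| "U_bac n q C = lastto0 n q"

definition U_lang_abc :: "nat set \<Rightarrow> nat \<Rightarrow> sym list set" where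
  "U_lang_abc F n = dfa_lang 0 (U_abc n) F"
definition U_lang_bac :: "nat set \<Rightarrow> nat \<Rightarrow> sym list set" where
  "U_lang_bac F n = dfa_lang 0 (U_bac n) F"

definition reversal :: "sym list set \<Rightarrow> sym list set" where
  "reversal L = rev ` L"

definition symdiff :: "'a set \<Rightarrow> 'a set \<Rightarrow> 'a set" where
  "symdiff X Y = (X - Y) \<union> (Y - X)"

end

theory Submission
  imports Defs
begin

definition fK :: "nat \<Rightarrow> sym list \<Rightarrow> nat \<Rightarrow> nat" where
  "fK k v q = foldl (U_abc k) q v"

fun sw :: "sym \<Rightarrow> sym" where "sw A = B" | "sw B = A" | "sw C = C"

lemma sw_sw[simp]: "sw (sw x) = x" by (cases x) auto
lemma map_sw_sw[simp]: "map sw (map sw v) = v" by (induct v) auto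

lemma U_bac_sw: "U_bac n q x = U_abc n q (sw x)" by (cases x) auto

lemma foldl_bac: "foldl (U_bac n) q v = fK n (map sw v) q"
  by (induct v arbitrary: q) (auto simp: fK_def U_bac_sw)

lemma fK_Nil[simp]: "fK k [] q = q" by (simp add: fK_def)
lemma fK_Cons[simp]: "fK k (x#v) q = fK k v (U_abc k q x)" by (simp add: fK_def)
lemma fK_append[simp]: "fK k (u@v) q = fK k v (fK k u q)" by (simp add: fK_def)

lemma swp_swp[simp]: "swp (swp q) = q" by (simp add: swp_def)
lemma swp_lt: "q < k \<Longrightarrow> 2 \<le> k \<Longrightarrow> swp q < k" by (auto simp: swp_def)
lemma swp_ge2[simp]: "2 \<le> q \<Longrightarrow> swp q = q" by (simp add: swp_def)
lemma swp_0[simp]: "swp 0 = 1" and swp_1[simp]: "swp 1 = 0" and swp_Suc0[simp]: "swp (Suc 0) = 0" by (simp_all add: swp_def)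

lemma U_lt: "q < k \<Longrightarrow> 2 \<le> k \<Longrightarrow> U_abc k q x < k"
  by (cases x) (auto simp: cyc_def swp_lt lastto0_def)

lemma fK_lt: "q < k \<Longrightarrow> 2 \<le> k \<Longrightarrow> fK k v q < k"
  by (induct v arbitrary: q) (auto simp: U_lt)

lemma fK_A[simp]: "fK k [A] q = (q+1) mod k" by (simp add: cyc_def)
lemma fK_B[simp]: "fK k [B] q = swp q" by simp

lemma fK_repA: "q < k \<Longrightarrow> fK k (replicate j A) q = (q + j) mod k"
proof (induct j arbitrary: q)
  case 0 then show ?case by simp
next
  case (Suc j)
  have "(q + 1) mod k < k" using Suc.prems by simp
  then have "fK k (replicate j A) ((q+1) mod k) = ((q + 1) mod k + j) mod k" using Suc.hyps by blast
  also have "\<dots> = (q + Suc j) mod k" by (simp add: mod_add_left_eq)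
  finally show ?case by (simp add: cyc_def)
qed

lemma fK_repB: "fK k (replicate j B) q = (if even j then q else swp q)"
  by (induct j arbitrary: q) auto

definition pre :: "nat \<Rightarrow> sym list \<Rightarrow> nat set \<Rightarrow> nat set" where
  "pre k g S = {q. q < k \<and> fK k g q \<in> S}"

definition RS :: "nat \<Rightarrow> nat \<Rightarrow> nat set \<Rightarrow> (nat set \<times> nat set) set" where
  "RS m n F2 = {(S,T). \<exists>v. S = pre m v {0,2} \<and> T = pre n (map sw v) F2}"

lemma RS_start: "(pre m [] {0,2}, pre n [] F2) \<in> RS m n F2"
  unfolding RS_def by (rule CollectI, simp, rule exI[of _ "[]"], simp)

lemma pre_append: "2 \<le> k \<Longrightarrow> pre k (g@v) X = pre k g (pre k v X)"
  by (auto simp: pre_def fK_lt)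

lemma RS_pre: "2 \<le> m \<Longrightarrow> 2 \<le> n \<Longrightarrow> (S,T) \<in> RS m n F2 \<Longrightarrow> (pre m g S, pre n (map sw g) T) \<in> RS m n F2"
  unfolding RS_def
  apply clarsimp
  subgoal for v by (rule exI[of _ "g@v"]) (simp add: pre_append)
  done

fun invw :: "nat \<Rightarrow> sym list \<Rightarrow> sym list" where
  "invw N [] = []" | "invw N (x#g) = invw N g @ replicate N x"

lemma map_sw_invw: "map sw (invw N g) = invw N (map sw g)"
  by (induct g) auto

lemma set_invw: "set g \<subseteq> {A,B} \<Longrightarrow> set (invw N g) \<subseteq> {A,B}"
  by (induct g) auto

lemma set_map_sw: "set g \<subseteq> {A,B} \<Longrightarrow> set (map sw g) \<subseteq> {A,B}"
  by (induct g) auto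

lemma letter_inv:
  assumes "x \<in> {A,B}" "q < k" "2*k dvd Suc N"
  shows "U_abc k (fK k (replicate N x) q) x = q"
proof (cases x)
  case A
  have "U_abc k (fK k (replicate N x) q) x = ((q + N) mod k + 1) mod k"
    using A assms by (simp add: fK_repA cyc_def)
  also have "\<dots> = (q + Suc N) mod k" by (simp add: mod_Suc_eq)
  also have "\<dots> = q"
  proof -
    obtain j where "Suc N = 2*k*j" using assms(3) by (auto elim: dvdE)
    then have "q + Suc N = q + k*(2*j)" by simp
    then show ?thesis using assms(2) by simp
  qed
  finally show ?thesis .
next
  case B
  have "2 dvd Suc N" using assms(3) dvd_trans[of 2 "2*k" "Suc N"] by simp
  then have "odd N" by simp
  then show ?thesis using B by (simp add: fK_repB)
next
  case C then show ?thesis using assms by simp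
qed

lemma perm_inv1:
  assumes "set g \<subseteq> {A,B}" "q < k" "2 \<le> k" "2*k dvd Suc N"
  shows "fK k (invw N g @ g) q = q"
  using assms
proof (induct g arbitrary: q)
  case Nil then show ?case by simp
next
  case (Cons x g)
  have q': "fK k (invw N g) q < k" using Cons.prems fK_lt by blast
  have "fK k (invw N (x#g) @ x # g) q = fK k g (U_abc k (fK k (replicate N x) (fK k (invw N g) q)) x)"
    by simp
  also have "\<dots> = fK k g (fK k (invw N g) q)"
    using letter_inv[of x "fK k (invw N g) q" k N] Cons.prems q' by simp
  also have "\<dots> = q" using Cons by simp
  finally show ?case .
qed

lemma perm_surj:
  assumes "set g \<subseteq> {A,B}" "2 \<le> k"
  shows "fK k g ` {..<k} = {..<k}"
proof
  show "fK k g ` {..<k} \<subseteq> {..<k}" using fK_lt assms by auto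
  show "{..<k} \<subseteq> fK k g ` {..<k}"
  proof
    fix q assume q: "q \<in> {..<k}"
    define N where "N = 2*k - 1"
    have d: "2*k dvd Suc N" using assms by (simp add: N_def)
    have "fK k g (fK k (invw N g) q) = q" using perm_inv1[OF assms(1) _ assms(2) d] q by simp
    moreover have "fK k (invw N g) q \<in> {..<k}" using q assms fK_lt by auto
    ultimately show "q \<in> fK k g ` {..<k}" by (metis image_eqI)
  qed
qed

lemma perm_inj:
  assumes "set g \<subseteq> {A,B}" "2 \<le> k"
  shows "inj_on (fK k g) {..<k}"
  by (rule eq_card_imp_inj_on) (simp_all add: perm_surj[OF assms])

lemma perm_inv2:
  assumes "set g \<subseteq> {A,B}" "q < k" "2 \<le> k" "2*k dvd Suc N"
  shows "fK k (g @ invw N g) q = q"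
proof -
  have p: "fK k g q < k" using assms fK_lt by blast
  have "fK k g (fK k (invw N g) (fK k g q)) = fK k g q"
    using perm_inv1[OF assms(1) p assms(3,4)] by simp
  moreover have "fK k (invw N g) (fK k g q) < k" using p assms fK_lt by blast
  ultimately show ?thesis using perm_inj[OF assms(1,3)] assms(2)
    by (auto dest: inj_onD)
qed

lemma RS_back:
  assumes "set g \<subseteq> {A,B}" "S \<subseteq> {..<m}" "T \<subseteq> {..<n}" "2 \<le> m" "2 \<le> n"
    and "(pre m g S, pre n (map sw g) T) \<in> RS m n F2"
  shows "(S,T) \<in> RS m n F2"
proof -
  define N where "N = 2*m*n - 1"
  have d1: "2*m dvd Suc N" using assms by (simp add: N_def)
  have "Suc N = (2*n)*m" using assms by (simp add: N_def)
  then have d2: "2*n dvd Suc N" by simp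
  have "(pre m (invw N g) (pre m g S), pre n (map sw (invw N g)) (pre n (map sw g) T)) \<in> RS m n F2"
    using RS_pre assms by blast
  moreover have "pre m (invw N g) (pre m g S) = S"
    using assms perm_inv1[OF assms(1) _ assms(4) d1]
    by (auto simp: pre_append[symmetric] pre_def subset_iff fK_lt)
  moreover have "pre n (map sw (invw N g)) (pre n (map sw g) T) = T"
    using assms perm_inv1[OF set_map_sw[OF assms(1)] _ assms(5) d2]
    by (auto simp: pre_append[symmetric] pre_def map_sw_invw subset_iff fK_lt)
  ultimately show ?thesis by simp
qed

lemma card_pre:
  assumes "set g \<subseteq> {A,B}" "2 \<le> k" "S \<subseteq> {..<k}"
  shows "card (pre k g S) = card S"
proof -
  have inj: "inj_on (fK k g) (pre k g S)"
    using perm_inj[OF assms(1,2)] by (rule inj_on_subset) (auto simp: pre_def)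
  have "fK k g ` pre k g S = S"
  proof
    show "fK k g ` pre k g S \<subseteq> S" by (auto simp: pre_def)
    show "S \<subseteq> fK k g ` pre k g S"
    proof
      fix q assume "q \<in> S"
      then have "q \<in> fK k g ` {..<k}" using perm_surj[OF assms(1,2)] assms(3) by auto
      then obtain p where "p < k" "q = fK k g p" by auto
      then show "q \<in> fK k g ` pre k g S" using \<open>q \<in> S\<close> by (auto simp: pre_def)
    qed
  qed
  then show ?thesis using card_image[OF inj] by simp
qed


lemma card2E: assumes "card P = 2" obtains u v where "P = {u,v}" "u \<noteq> v"
  using assms by (auto simp: card_2_iff)

lemma PosK:
  assumes k: "3 \<le> k" and P: "P \<subseteq> {..<k}" "card P = 2"
  shows "\<exists>g. set g \<subseteq> {A,B} \<and> fK k g ` {k-1, 0} = P"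
proof -
  define W where "W x \<longleftrightarrow> (\<exists>g. set g \<subseteq> {A,B} \<and> fK k g (k-1) = x \<and> fK k g 0 = 0)" for x
  have W0: "W (k-1)" unfolding W_def by (rule exI[of _ "[]"]) simp
  have step: "W x \<Longrightarrow> W (swp ((x+1) mod k))" for x
  proof -
    assume "W x"
    then obtain g where g: "set g \<subseteq> {A,B}" "fK k g (k-1) = x" "fK k g 0 = 0" by (auto simp: W_def)
    show ?thesis unfolding W_def
      by (rule exI[of _ "g@[A,B]"]) (use g k in \<open>auto simp: cyc_def\<close>)
  qed
  have Wall: "1 \<le> x \<Longrightarrow> x \<le> k-1 \<Longrightarrow> W x" for x
  proof (induct x)
    case 0 then show ?case by simp
  next
    case (Suc x)
    show ?case
    proof (cases "x = 0")
      case True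
      have "swp (((k-1)+1) mod k) = 1" using k by simp
      then show ?thesis using step[OF W0] True by simp
    next
      case False
      then have "W x" using Suc by simp
      moreover have "swp ((x+1) mod k) = Suc x" using Suc.prems False k by simp
      ultimately show ?thesis using step by metis
    qed
  qed
  obtain u v where uv: "P = {u,v}" "u \<noteq> v" using P(2) by (rule card2E)
  have u: "u < k" and v: "v < k" using P uv by auto
  define d where "d = (if v \<le> u then u - v else u + k - v)"
  have d1: "1 \<le> d" using u v uv(2) unfolding d_def by auto
  have d2: "d \<le> k - 1" using u v unfolding d_def by auto
  obtain g where g: "set g \<subseteq> {A,B}" "fK k g (k-1) = d" "fK k g 0 = 0" using Wall[OF d1 d2] W_def by auto
  have "(d + v) mod k = u" unfolding d_def using u v by auto
  then show ?thesis using g u v uv(1) d2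
    by (intro exI[of _ "g @ replicate v A"]) (auto simp: fK_repA)
qed

lemma mod_Suc_k[simp]: "Suc k mod k = Suc 0 mod k"
  using mod_add_self2[of "Suc 0" k] by simp
lemma mod_Suc_Suc_k[simp]: "Suc (Suc k) mod k = Suc (Suc 0) mod k"
  using mod_add_self2[of "Suc (Suc 0)" k] by simp

lemma fK_append_fun: "fK k (u@v) = fK k v \<circ> fK k u" by (rule ext) simp

definition EE :: "nat \<Rightarrow> sym list" where "EE n = [B,A] @ replicate (2*n-1) B"

lemma EE_set: "set (EE n) \<subseteq> {A,B}" by (auto simp: EE_def)

lemma fK_EE: "fK k (EE n) q = swp ((swp q + 1) mod k)" if "1 \<le> n"
proof -
  have "odd (2*n-1)" using that by simp
  then show ?thesis by (simp add: EE_def fK_repB cyc_def)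
qed

lemma fK_EE_L: assumes "2 \<le> n" shows "fK n (map sw (EE n)) ` {n-1,0} = {n-1,0}"
proof -
  have e: "map sw (EE n) = [A,B] @ replicate (2*n-1) A" by (simp add: EE_def)
  have a: "fK n (map sw (EE n)) (n-1) = 0"
  proof -
    have "fK n (map sw (EE n)) (n-1) = (swp (((n-1)+1) mod n) + (2*n-1)) mod n"
      using assms by (simp add: e cyc_def fK_repA swp_lt)
    also have "\<dots> = 0" using assms by simp
    finally show ?thesis .
  qed
  have b: "fK n (map sw (EE n)) 0 = n-1"
  proof -
    have "fK n (map sw (EE n)) 0 = (swp ((0+1) mod n) + (2*n-1)) mod n"
      using assms by (simp add: e cyc_def fK_repA swp_lt)
    also have "\<dots> = ((n-1) + n) mod n" using assms by (simp add: mult_2)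
    also have "\<dots> = n - 1" using assms by (simp only: mod_add_self2) simp
    finally show ?thesis .
  qed
  show ?thesis using a b by auto
qed

lemma fK_AA: "fK k [A,A] q = (q + 2) mod k" by (simp add: cyc_def mod_Suc_eq)

lemma HK:
  assumes k: "3 \<le> k" "k \<noteq> 4" and n: "2 \<le> n" and P: "P \<subseteq> {..<k}" "card P = 2"
  shows "\<exists>g. set g \<subseteq> {A,B} \<and> fK k g ` {k-1, 0} = P \<and> fK n (map sw g) ` {n-1,0} = {n-1,0}"
proof -
  define Z where "Z Q \<longleftrightarrow> (\<exists>g. set g \<subseteq> {A,B} \<and> fK k g ` {k-1, 0} = Q \<and> fK n (map sw g) ` {n-1,0} = {n-1,0})" for Q
  define Zc where "Zc x y \<longleftrightarrow> Z {swp x, swp y}" for x y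
  have Znu: "Z Q \<Longrightarrow> Z ((\<lambda>q. swp ((swp q + 1) mod k)) ` Q)" for Q
  proof -
    assume "Z Q"
    then obtain g where g: "set g \<subseteq> {A,B}" "fK k g ` {k-1, 0} = Q" "fK n (map sw g) ` {n-1,0} = {n-1,0}"
      by (auto simp: Z_def)
    have "fK k (g @ EE n) ` {k-1,0} = (\<lambda>q. swp ((swp q + 1) mod k)) ` Q"
      using g(2) n by (auto simp: fK_EE image_iff)
    moreover have "fK n (map sw (g @ EE n)) ` {n-1,0} = {n-1,0}"
    proof -
      have "fK n (map sw (g @ EE n)) ` {n-1,0} = fK n (map sw (EE n)) ` (fK n (map sw g) ` {n-1,0})"
        by (simp only: map_append fK_append_fun image_comp)
      also have "\<dots> = {n-1,0}" unfolding g(3) by (rule fK_EE_L[OF n])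
      finally show ?thesis .
    qed
    ultimately show "Z ((\<lambda>q. swp ((swp q + 1) mod k)) ` Q)" unfolding Z_def
      using g(1) EE_set by (intro exI[of _ "g @ EE n"]) auto
  qed
  have Zrot: "Z Q \<Longrightarrow> Z ((\<lambda>q. (q + 2) mod k) ` Q)" for Q
  proof -
    assume "Z Q"
    then obtain g where g: "set g \<subseteq> {A,B}" "fK k g ` {k-1, 0} = Q" "fK n (map sw g) ` {n-1,0} = {n-1,0}"
      by (auto simp: Z_def)
    have "fK k (g @ [A,A]) ` {k-1,0} = (\<lambda>q. (q + 2) mod k) ` Q"
      using g(2) by (auto simp: fK_AA simp del: fK_Cons fK_append simp add: fK_append[of k g "[A,A]"] image_iff)
    moreover have "fK n (map sw (g @ [A,A])) ` {n-1,0} = {n-1,0}"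
      using g(3) by simp
    ultimately show "Z ((\<lambda>q. (q + 2) mod k) ` Q)" unfolding Z_def
      using g(1) by (intro exI[of _ "g @ [A,A]"]) auto
  qed
  have shift1: "Zc x y \<Longrightarrow> x < k \<Longrightarrow> y < k \<Longrightarrow> Zc ((x+1) mod k) ((y+1) mod k)" for x y
    using Znu[of "{swp x, swp y}"] unfolding Zc_def by simp
  have shift: "Zc x y \<Longrightarrow> x < k \<Longrightarrow> y < k \<Longrightarrow> Zc ((x+j) mod k) ((y+j) mod k)" for x y j
  proof (induct j)
    case 0 then show ?case by simp
  next
    case (Suc j)
    have "Zc ((x+j) mod k) ((y+j) mod k)" using Suc by simp
    from shift1[OF this] k show ?case by (simp add: mod_Suc_eq)
  qed
  have rot: "Zc x y \<Longrightarrow> Zc (swp ((swp x + 2) mod k)) (swp ((swp y + 2) mod k))" for x y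
    using Zrot[of "{swp x, swp y}"] unfolding Zc_def by simp
  have shiftE: "Zc x y \<Longrightarrow> x < k \<Longrightarrow> y < k \<Longrightarrow> (x+j) mod k = x' \<Longrightarrow> (y+j) mod k = y' \<Longrightarrow> Zc x' y'" for x y j x' y'
    using shift by blast
  have rotE: "Zc x y \<Longrightarrow> swp ((swp x + 2) mod k) = x' \<Longrightarrow> swp ((swp y + 2) mod k) = y' \<Longrightarrow> Zc x' y'" for x y x' y'
    using rot by blast
  have start: "Zc (k-1) 1" unfolding Zc_def Z_def using k
    by (intro exI[of _ "[]"]) auto
  have "Zc ((k-1+1) mod k) ((1+1) mod k)" using shift[OF start, of 1] k by simp
  moreover have "(k-1+1) mod k = 0" "(1+1) mod k = (2::nat)" using k by auto
  ultimately have Z02: "Zc 0 2" by (simp only:)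
  have all0: "Zc 0 d" if "1 \<le> d" "d \<le> k - 1" for d
  proof (cases "k = 3")
    case True
    then have "d = 1 \<or> d = 2" using that by auto
    moreover have "Zc 0 1"
    proof -
      have "Zc 1 0" using shift[OF start, of 2] True by simp
      then show ?thesis unfolding Zc_def by (simp add: insert_commute)
    qed
    ultimately show ?thesis using Z02 by auto
  next
    case False
    then have k5: "5 \<le> k" using k by simp
    have "Zc 3 4" by (rule rotE[OF Z02]) (use k5 in \<open>auto simp: swp_def\<close>)
    then have Z12: "Zc 1 2" by (rule shiftE[of _ _ "k-2"]) (use k5 in auto)
    then have Z01: "Zc 0 1" by (rule shiftE[of _ _ "k-1"]) (use k5 in auto)
    then have "Zc (k-1) 0" by (rule shiftE[of _ _ "k-1"]) (use k5 in auto)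
    then have Z03: "Zc 0 3" by (rule rotE) (use k5 in \<open>auto simp: swp_def\<close>)
    have ind: "Zc 0 d" if "3 \<le> d" "d \<le> k-1" for d
      using that
    proof (induct d)
      case 0 then show ?case by simp
    next
      case (Suc d)
      show ?case
      proof (cases "d = 2")
        case True then show ?thesis using Z03 by simp
      next
        case False
        then have d3: "3 \<le> d" "d \<le> k - 2" using Suc by auto
        have "Zc 0 d" using Suc d3 by simp
        then have "Zc (k-d) 0" by (rule shiftE[of _ _ "k-d"]) (use d3 in auto)
        then have Zd: "Zc (k-d+2) 3" by (rule rotE) (use d3 k5 in \<open>auto simp: swp_def\<close>)
        have kk: "Suc (Suc (k - 2)) = k" using k5 by arith
        show ?thesis by (rule shiftE[OF Zd, of "d-2"]) (use d3 k5 kk in auto)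
      qed
    qed
    show ?thesis using that Z01 Z02 ind by (cases "d \<le> 2") (auto simp: le_Suc_eq numeral_2_eq_2)
  qed
  obtain u v where uv: "P = {u,v}" "u \<noteq> v" using P(2) by (rule card2E)
  have u: "u < k" and v: "v < k" using P uv by auto
  define x where "x = swp u"
  define y where "y = swp v"
  have x: "x < k" and y: "y < k" using u v k by (auto simp: x_def y_def swp_lt)
  have xy: "x \<noteq> y" using uv(2) by (metis swp_swp x_def y_def)
  define d where "d = (if x \<le> y then y - x else y + k - x)"
  have d1: "1 \<le> d" and d2: "d \<le> k - 1" using x y xy unfolding d_def by auto
  have "Zc ((0 + x) mod k) ((d + x) mod k)" using shift[OF all0[OF d1 d2], of x] d2 k by simp
  moreover have "(0 + x) mod k = x" using x by simp
  moreover have "(d + x) mod k = y" unfolding d_def using x y by auto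
  ultimately have "Zc x y" by simp
  then have "Z P" unfolding Zc_def x_def y_def using uv by simp
  then show ?thesis unfolding Z_def .
qed


lemma sw_comp[simp]: "sw \<circ> sw = id" by (rule ext) simp

lemma image_pre:
  assumes "set g \<subseteq> {A,B}" "2 \<le> k" "S \<subseteq> {..<k}"
  shows "fK k g ` pre k g S = S"
proof
  show "fK k g ` pre k g S \<subseteq> S" by (auto simp: pre_def)
  show "S \<subseteq> fK k g ` pre k g S"
  proof
    fix q assume "q \<in> S"
    then have "q \<in> fK k g ` {..<k}" using perm_surj[OF assms(1,2)] assms(3) by auto
    then obtain p where "p < k" "q = fK k g p" by auto
    then show "q \<in> fK k g ` pre k g S" using \<open>q \<in> S\<close> by (auto simp: pre_def)
  qed
qed

lemma pre_sub: "pre k g S \<subseteq> {..<k}" by (auto simp: pre_def)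

lemma G1:
  assumes m: "3 \<le> m" and n: "3 \<le> n" and mn: "\<not> (m = 4 \<and> n = 4)"
    and P: "P \<subseteq> {..<m}" "card P = 2" and Q: "Q \<subseteq> {..<n}" "card Q = 2"
  shows "\<exists>g. set g \<subseteq> {A,B} \<and> fK m g ` {m-1,0} = P \<and> fK n (map sw g) ` {n-1,0} = Q"
proof (cases "m = 4")
  case False
  obtain g1' where g1': "set g1' \<subseteq> {A,B}" "fK n g1' ` {n-1,0} = Q" using PosK[OF n Q] by blast
  define g1 where "g1 = map sw g1'"
  have g1: "set g1 \<subseteq> {A,B}" "map sw g1 = g1'" using g1' set_map_sw by (auto simp: g1_def)
  define P' where "P' = pre m g1 P"
  have P': "P' \<subseteq> {..<m}" "card P' = 2" using card_pre[OF g1(1) _ P(1)] P m pre_sub by (auto simp: P'_def)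
  obtain h where h: "set h \<subseteq> {A,B}" "fK m h ` {m-1,0} = P'" "fK n (map sw h) ` {n-1,0} = {n-1,0}"
    using HK[of m n P'] m False n P' by auto
  have "fK m (h @ g1) ` {m-1,0} = fK m g1 ` (fK m h ` {m-1,0})" by (simp add: fK_append_fun image_comp)
  also have "\<dots> = P" using h(2) image_pre[OF g1(1) _ P(1)] m by (simp add: P'_def)
  finally have 1: "fK m (h @ g1) ` {m-1,0} = P" .
  have "fK n (map sw (h @ g1)) ` {n-1,0} = fK n g1' ` (fK n (map sw h) ` {n-1,0})"
    using g1(2) by (simp add: fK_append_fun image_comp)
  also have "\<dots> = Q" using h(3) g1'(2) by simp
  finally have 2: "fK n (map sw (h @ g1)) ` {n-1,0} = Q" .
  show ?thesis using 1 2 h(1) g1(1) by (intro exI[of _ "h @ g1"]) auto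
next
  case True
  then have n4: "n \<noteq> 4" using mn by simp
  obtain g1 where g1: "set g1 \<subseteq> {A,B}" "fK m g1 ` {m-1,0} = P" using PosK[OF m P] by blast
  define Q' where "Q' = pre n (map sw g1) Q"
  have Q': "Q' \<subseteq> {..<n}" "card Q' = 2" using card_pre[OF set_map_sw[OF g1(1)] _ Q(1)] Q n pre_sub by (auto simp: Q'_def)
  obtain h' where h': "set h' \<subseteq> {A,B}" "fK n h' ` {n-1,0} = Q'" "fK m (map sw h') ` {m-1,0} = {m-1,0}"
    using HK[of n m Q'] m n4 n Q' by auto
  define h where "h = map sw h'"
  have h: "set h \<subseteq> {A,B}" "map sw h = h'" using h' set_map_sw by (auto simp: h_def)
  have "fK m (h @ g1) ` {m-1,0} = fK m g1 ` (fK m h ` {m-1,0})" by (simp add: fK_append_fun image_comp)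
  also have "\<dots> = P" using h' g1(2) by (simp add: h_def)
  finally have 1: "fK m (h @ g1) ` {m-1,0} = P" .
  have "fK n (map sw (h @ g1)) ` {n-1,0} = fK n (map sw g1) ` (fK n h' ` {n-1,0})"
    using h(2) by (simp add: fK_append_fun image_comp)
  also have "\<dots> = Q" using h'(2) image_pre[OF set_map_sw[OF g1(1)] _ Q(1)] n by (simp add: Q'_def)
  finally have 2: "fK n (map sw (h @ g1)) ` {n-1,0} = Q" .
  show ?thesis using 1 2 h(1) g1(1) by (intro exI[of _ "h @ g1"]) auto
qed


definition FL :: "nat \<Rightarrow> nat set" where "FL n = (if 4 \<le> n then {1,3} else {1})"
definition dist :: "nat \<Rightarrow> nat \<Rightarrow> nat" where "dist a b = (if a \<le> b then b - a else a - b)"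

lemma choose_pair:
  assumes k: "3 \<le> (k::nat)" and X: "X \<subseteq> {..<k}"
  obtains R where "R \<subseteq> {..<k}" "card R = 2" "2 \<le> card X \<Longrightarrow> R \<subseteq> X" "\<not> 2 \<le> card X \<Longrightarrow> R \<inter> X = {}"
proof (cases "2 \<le> card X")
  case True
  then obtain R where R: "R \<subseteq> X" "card R = 2" by (rule obtain_subset_with_card_n)
  show ?thesis
  proof (rule that[of R])
    show "R \<subseteq> {..<k}" using R X by blast
  qed (use R True in auto)
next
  case False
  have fin: "finite X" using X finite_subset by blast
  have "card ({..<k} - X) = k - card X" using X fin by (simp add: card_Diff_subset)
  then have "2 \<le> card ({..<k} - X)" using False k by simp
  then obtain R where R: "R \<subseteq> {..<k} - X" "card R = 2" by (rule obtain_subset_with_card_n)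
  show ?thesis
  proof (rule that[of R])
    show "R \<subseteq> {..<k}" using R by blast
    show "R \<inter> X = {}" using R by blast
  qed (use R False in auto)
qed

lemma fK_C[simp]: "fK k [C] q = lastto0 k q" by simp

lemma side_adjust:
  assumes k: "3 \<le> k" and X1: "X1 \<subseteq> {..<k}" and eq: "k-1 \<in> X1 \<longleftrightarrow> 0 \<in> X1"
    and inside: "k-1 \<in> X1 \<longleftrightarrow> 2 \<le> card X1" and x0: "x0 = 1 \<or> x0 = 2"
  defines "X2 \<equiv> (if x0 < card X1 then X1 - {k-1} else if card X1 < x0 then insert (k-1) X1 else X1)"
  shows "X2 \<subseteq> {..<k}" "pre k [C] X2 = X1" "dist (card X2) x0 \<le> dist (card X1) x0"
    "card X1 \<noteq> x0 \<Longrightarrow> dist (card X2) x0 < dist (card X1) x0"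
proof -
  have fin: "finite X1" using X1 finite_subset by blast
  show "X2 \<subseteq> {..<k}" using X1 k by (auto simp: X2_def)
  show "pre k [C] X2 = X1"
  proof (rule set_eqI)
    fix q
    have X2m: "\<forall>p. p \<noteq> k - 1 \<longrightarrow> (p \<in> X2 \<longleftrightarrow> p \<in> X1)" unfolding X2_def by simp
    have 0: "0 \<noteq> k - 1" using k by simp
    show "q \<in> pre k [C] X2 \<longleftrightarrow> q \<in> X1"
    proof (cases "q = k - 1")
      case True
      then have "q \<in> pre k [C] X2 \<longleftrightarrow> 0 \<in> X2" using k by (simp add: pre_def lastto0_def)
      also have "\<dots> \<longleftrightarrow> 0 \<in> X1" using X2m 0 by blast
      finally show ?thesis using eq True by simp
    next
      case False
      have "q \<in> X1 \<Longrightarrow> q < k" using X1 by auto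
      then have "q \<in> pre k [C] X2 \<longleftrightarrow> q < k \<and> q \<in> X2" using False by (auto simp: pre_def lastto0_def)
      also have "\<dots> \<longleftrightarrow> q \<in> X1" using X2m False X1 by blast
      finally show ?thesis .
    qed
  qed
  have c1: "x0 < card X1 \<Longrightarrow> card X2 = card X1 - 1"
  proof -
    assume a: "x0 < card X1"
    then have "k - 1 \<in> X1" using inside x0 by auto
    then show ?thesis using a fin by (simp add: X2_def)
  qed
  have c2: "card X1 < x0 \<Longrightarrow> card X2 = card X1 + 1"
  proof -
    assume a: "card X1 < x0"
    then have "k - 1 \<notin> X1" using inside x0 by auto
    then show ?thesis using a fin by (simp add: X2_def)
  qed
  have c3: "card X1 = x0 \<Longrightarrow> card X2 = card X1" by (simp add: X2_def)
  show "dist (card X2) x0 \<le> dist (card X1) x0"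
  proof (cases "x0 < card X1")
    case True then show ?thesis using c1 by (simp add: dist_def) arith
  next
    case False
    then show ?thesis using c2 c3 by (cases "card X1 < x0") (auto simp: dist_def)
  qed
  show "card X1 \<noteq> x0 \<Longrightarrow> dist (card X2) x0 < dist (card X1) x0"
  proof (cases "x0 < card X1")
    case True then show ?thesis using c1 x0 by (auto simp: dist_def)
  next
    case False
    then show "card X1 \<noteq> x0 \<Longrightarrow> ?thesis" using c2 by (simp add: dist_def)
  qed
qed

lemma inv_image_sl:
  assumes "set h \<subseteq> {A,B}" "2 \<le> k" "2*k dvd Suc N" "X \<subseteq> {..<k}"
  shows "fK k (invw N h) ` (fK k h ` X) = X"
proof -
  have "fK k (invw N h) (fK k h q) = q" if "q \<in> X" for q
    using perm_inv2[OF assms(1) _ assms(2,3), of q] that assms(4) by auto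
  then show ?thesis by (simp add: image_image)
qed

lemma card_FL: "3 \<le> n \<Longrightarrow> card (FL n) = (if 4 \<le> n then 2 else 1)" by (simp add: FL_def)
lemma FL_sub: "3 \<le> n \<Longrightarrow> FL n \<subseteq> {..<n}" by (auto simp: FL_def)

lemma reach_base:
  assumes m: "3 \<le> m" and n: "3 \<le> n" and mn: "\<not> (m = 4 \<and> n = 4)"
    and S: "S \<subseteq> {..<m}" "card S = 2" and T: "T \<subseteq> {..<n}" "card T = card (FL n)"
  shows "(S,T) \<in> RS m n (FL n)"
proof -
  define Q0 where "Q0 = (if 4 \<le> n then {1,3} else {0,2::nat})"
  define QT where "QT = (if 4 \<le> n then T else {..<n} - T)"
  have Q0: "Q0 \<subseteq> {..<n}" "card Q0 = 2" using n by (auto simp: Q0_def)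
  have finT: "finite T" using T finite_subset by blast
  have QT: "QT \<subseteq> {..<n}" "card QT = 2"
  proof -
    show "QT \<subseteq> {..<n}" using T by (auto simp: QT_def)
    show "card QT = 2"
    proof (cases "4 \<le> n")
      case True then show ?thesis using T card_FL[OF n] by (simp add: QT_def)
    next
      case False
      then have "n = 3" using n by simp
      then show ?thesis using T card_FL[OF n] finT by (simp add: QT_def card_Diff_subset)
    qed
  qed
  have P0: "{0,2} \<subseteq> {..<m}" "card {0,2::nat} = 2" using m by auto
  obtain h0 where h0: "set h0 \<subseteq> {A,B}" "fK m h0 ` {m-1,0} = {0,2}" "fK n (map sw h0) ` {n-1,0} = Q0"
    using G1[OF m n mn P0 Q0] by blast
  obtain g where g: "set g \<subseteq> {A,B}" "fK m g ` {m-1,0} = S" "fK n (map sw g) ` {n-1,0} = QT"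
    using G1[OF m n mn S QT] by blast
  define N where "N = 2*m*n - 1"
  have d1: "2*m dvd Suc N" using m n by (simp add: N_def)
  have "Suc N = (2*n)*m" using m n by (simp add: N_def)
  then have d2: "2*n dvd Suc N" by simp
  define w where "w = invw N h0 @ g"
  have w: "set w \<subseteq> {A,B}" using h0 g set_invw by (auto simp: w_def)
  have wK: "fK m w ` {0,2} = S"
  proof -
    have "fK m w ` {0,2} = fK m w ` (fK m h0 ` {m-1,0})" by (simp only: h0(2))
    also have "\<dots> = fK m g ` (fK m (invw N h0) ` (fK m h0 ` {m-1,0}))"
      by (simp only: w_def fK_append_fun image_comp comp_assoc)
    also have "\<dots> = S" using inv_image_sl[OF h0(1) _ d1, of "{m-1,0}"] m g(2) by simp
    finally show ?thesis .
  qed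
  have wL: "fK n (map sw w) ` Q0 = QT"
  proof -
    have "fK n (map sw w) ` Q0 = fK n (map sw w) ` (fK n (map sw h0) ` {n-1,0})" by (simp only: h0(3))
    also have "\<dots> = fK n (map sw g) ` (fK n (invw N (map sw h0)) ` (fK n (map sw h0) ` {n-1,0}))"
      by (simp only: w_def fK_append_fun image_comp map_sw_invw map_append comp_assoc)
    also have "\<dots> = QT" using inv_image_sl[OF set_map_sw[OF h0(1)] _ d2, of "{n-1,0}"] n g(3) by simp
    finally show ?thesis .
  qed
  have preK: "pre m w S = {0,2}"
  proof -
    have "{0,2} \<subseteq> pre m w S" using wK m by (auto simp: pre_def)
    moreover have "card (pre m w S) = card {0,2::nat}" using card_pre[OF w _ S(1)] m S(2) by simp
    ultimately show ?thesis by (metis card_subset_eq finite_subset pre_sub finite_lessThan)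
  qed
  have preL: "pre n (map sw w) T = FL n"
  proof (cases "4 \<le> n")
    case True
    have "{1,3} \<subseteq> pre n (map sw w) T" using wL True by (auto simp: pre_def Q0_def QT_def)
    moreover have "card (pre n (map sw w) T) = card {1,3::nat}"
      using card_pre[OF set_map_sw[OF w] _ T(1)] n T(2) card_FL[OF n] True by simp
    ultimately have "pre n (map sw w) T = {1,3}" by (metis card_subset_eq finite_subset pre_sub finite_lessThan)
    then show ?thesis using True by (simp add: FL_def)
  next
    case False
    then have n3: "n = 3" using n by simp
    have "pre n (map sw w) T \<subseteq> {1}"
    proof
      fix q assume q: "q \<in> pre n (map sw w) T"
      then have "q < 3" using n3 by (auto simp: pre_def)
      moreover have "q \<notin> {0,2}"
      proof
        assume "q \<in> {0,2}"
        then have "fK n (map sw w) q \<in> QT" using wL False by (auto simp: Q0_def)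
        then show False using q False by (auto simp: QT_def pre_def)
      qed
      ultimately show "q \<in> {1}" by auto
    qed
    moreover have "card (pre n (map sw w) T) = 1"
      using card_pre[OF set_map_sw[OF w] _ T(1)] n T(2) card_FL[OF n] False by simp
    ultimately have "pre n (map sw w) T = {1}" by (auto simp: card_1_singleton_iff)
    then show ?thesis using False by (simp add: FL_def)
  qed
  have "(pre m [] {0,2}, pre n [] (FL n)) \<in> RS m n (FL n)" by (rule RS_start)
  moreover have "pre m [] {0,2} = {0,2}" using m by (auto simp: pre_def)
  moreover have "pre n [] (FL n) = FL n" using FL_sub[OF n] by (auto simp: pre_def)
  ultimately have "(pre m w S, pre n (map sw w) T) \<in> RS m n (FL n)" using preK preL by simp
  then show ?thesis using RS_back[OF w S(1) T(1)] m n by simp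
qed


lemma reach_gen:
  assumes m: "3 \<le> m" and n: "3 \<le> n" and mn: "\<not> (m = 4 \<and> n = 4)"
  shows "S \<subseteq> {..<m} \<Longrightarrow> T \<subseteq> {..<n} \<Longrightarrow> (S,T) \<in> RS m n (FL n)"
proof (induct "dist (card S) 2 + dist (card T) (card (FL n))" arbitrary: S T rule: less_induct)
  case less
  note S = less.prems(1) and T = less.prems(2)
  show ?case
  proof (cases "card S = 2 \<and> card T = card (FL n)")
    case True
    then show ?thesis using reach_base[OF m n mn S _ T] by blast
  next
    case False
    obtain P where P: "P \<subseteq> {..<m}" "card P = 2" "2 \<le> card S \<Longrightarrow> P \<subseteq> S" "\<not> 2 \<le> card S \<Longrightarrow> P \<inter> S = {}"
      using choose_pair[OF m S] by blast
    obtain Q where Q: "Q \<subseteq> {..<n}" "card Q = 2" "2 \<le> card T \<Longrightarrow> Q \<subseteq> T" "\<not> 2 \<le> card T \<Longrightarrow> Q \<inter> T = {}"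
      using choose_pair[OF n T] by blast
    obtain g where g: "set g \<subseteq> {A,B}" "fK m g ` {m-1,0} = P" "fK n (map sw g) ` {n-1,0} = Q"
      using G1[OF m n mn P(1,2) Q(1,2)] by blast
    define S1 where "S1 = pre m g S"
    define T1 where "T1 = pre n (map sw g) T"
    have cS1: "card S1 = card S" using card_pre[OF g(1) _ S] m by (simp add: S1_def)
    have cT1: "card T1 = card T" using card_pre[OF set_map_sw[OF g(1)] _ T] n by (simp add: T1_def)
    have S1s: "S1 \<subseteq> {..<m}" and T1s: "T1 \<subseteq> {..<n}" by (auto simp: S1_def T1_def pre_def)
    have gP: "fK m g (m-1) \<in> P" "fK m g 0 \<in> P" using g(2) by auto
    have gQ: "fK n (map sw g) (n-1) \<in> Q" "fK n (map sw g) 0 \<in> Q" using g(3) by auto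
    have inS: "(m-1 \<in> S1 \<longleftrightarrow> 2 \<le> card S1) \<and> (0 \<in> S1 \<longleftrightarrow> 2 \<le> card S1)"
      using P(3,4) gP m cS1 by (auto simp: S1_def pre_def)
    have inT: "(n-1 \<in> T1 \<longleftrightarrow> 2 \<le> card T1) \<and> (0 \<in> T1 \<longleftrightarrow> 2 \<le> card T1)"
      using Q(3,4) gQ n cT1 by (auto simp: T1_def pre_def)
    define S2 where "S2 = (if 2 < card S1 then S1 - {m-1} else if card S1 < 2 then insert (m-1) S1 else S1)"
    define t0 where "t0 = card (FL n)"
    have t0: "t0 = 1 \<or> t0 = 2" using card_FL[OF n] by (simp add: t0_def)
    define T2 where "T2 = (if t0 < card T1 then T1 - {n-1} else if card T1 < t0 then insert (n-1) T1 else T1)"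
    note adS = side_adjust[OF m S1s _ _ _, of 2, folded S2_def]
    note adT = side_adjust[OF n T1s _ _ t0, folded T2_def]
    have S2: "S2 \<subseteq> {..<m}" "pre m [C] S2 = S1" "dist (card S2) 2 \<le> dist (card S1) 2"
      "card S1 \<noteq> 2 \<Longrightarrow> dist (card S2) 2 < dist (card S1) 2"
      using adS inS by auto
    have T2: "T2 \<subseteq> {..<n}" "pre n [C] T2 = T1" "dist (card T2) t0 \<le> dist (card T1) t0"
      "card T1 \<noteq> t0 \<Longrightarrow> dist (card T2) t0 < dist (card T1) t0"
      using adT inT by auto
    have lt: "dist (card S2) 2 + dist (card T2) (card (FL n)) < dist (card S) 2 + dist (card T) (card (FL n))"
      using S2(3,4) T2(3,4) False cS1 cT1 by (auto simp: t0_def)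
    have "(S2,T2) \<in> RS m n (FL n)" using less.hyps[OF lt S2(1) T2(1)] .
    then have "(pre m [C] S2, pre n (map sw [C]) T2) \<in> RS m n (FL n)"
      using RS_pre[of m n S2 T2 "FL n" "[C]"] m n by simp
    then have "(pre m g S, pre n (map sw g) T) \<in> RS m n (FL n)" using S2(2) T2(2) by (simp add: S1_def T1_def)
    then show ?thesis using RS_back[OF g(1) S T] m n by simp
  qed
qed


lemma lt4: "(q::nat) < 4 \<longleftrightarrow> q = 0 \<or> q = 1 \<or> q = 2 \<or> q = 3" by arith

lemma pre44: "pre 4 v X = set (filter (\<lambda>q. fK 4 v q \<in> X) [0,1,2,3])"
proof -
  have "set (filter (\<lambda>q. fK 4 v q \<in> X) [0..<4]) = {q. q < 4 \<and> fK 4 v q \<in> X}" by auto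
  moreover have "[0..<4] = [0,1,2,3::nat]" by (simp add: upt_rec)
  ultimately show ?thesis unfolding pre_def by simp
qed

lemma stepx: "(S,T) \<in> RS 4 4 F \<Longrightarrow> pre 4 [x] S = S' \<Longrightarrow> pre 4 [sw x] T = T' \<Longrightarrow> (S',T') \<in> RS 4 4 F"
  using RS_pre[of 4 4 S T F "[x]"] by simp

lemma r44_0: "({0,2}, {1,3}) \<in> RS 4 4 (FL 4)"
  using RS_start[of 4 4 "FL 4"] by (simp add: pre44 FL_def)

lemma r44_1: "({1,3}, {0,3}) \<in> RS 4 4 (FL 4)"
  by (rule stepx[OF r44_0, of A]) (simp_all add: pre44 cyc_def swp_def lastto0_def)

lemma r44_2: "({1,2}, {0,2}) \<in> RS 4 4 (FL 4)"
  by (rule stepx[OF r44_0, of B]) (simp_all add: pre44 cyc_def swp_def lastto0_def)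

lemma r44_3: "({0,2,3}, {1}) \<in> RS 4 4 (FL 4)"
  by (rule stepx[OF r44_0, of C]) (simp_all add: pre44 cyc_def swp_def lastto0_def)

lemma r44_4: "({0,3}, {2,3}) \<in> RS 4 4 (FL 4)"
  by (rule stepx[OF r44_1, of B]) (simp_all add: pre44 cyc_def swp_def lastto0_def)

lemma r44_5: "({1}, {0,3}) \<in> RS 4 4 (FL 4)"
  by (rule stepx[OF r44_1, of C]) (simp_all add: pre44 cyc_def swp_def lastto0_def)

lemma r44_6: "({0,1}, {1,2}) \<in> RS 4 4 (FL 4)"
  by (rule stepx[OF r44_2, of A]) (simp_all add: pre44 cyc_def swp_def lastto0_def)

lemma r44_7: "({1,2}, {0,2,3}) \<in> RS 4 4 (FL 4)"
  by (rule stepx[OF r44_2, of C]) (simp_all add: pre44 cyc_def swp_def lastto0_def)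

lemma r44_8: "({1,2,3}, {0}) \<in> RS 4 4 (FL 4)"
  by (rule stepx[OF r44_3, of A]) (simp_all add: pre44 cyc_def swp_def lastto0_def)

lemma r44_9: "({2,3}, {2,3}) \<in> RS 4 4 (FL 4)"
  by (rule stepx[OF r44_4, of A]) (simp_all add: pre44 cyc_def swp_def lastto0_def)

lemma r44_10: "({1,3}, {1,2}) \<in> RS 4 4 (FL 4)"
  by (rule stepx[OF r44_4, of B]) (simp_all add: pre44 cyc_def swp_def lastto0_def)

lemma r44_11: "({0,3}, {2}) \<in> RS 4 4 (FL 4)"
  by (rule stepx[OF r44_4, of C]) (simp_all add: pre44 cyc_def swp_def lastto0_def)

lemma r44_12: "({0}, {1,3}) \<in> RS 4 4 (FL 4)"
  by (rule stepx[OF r44_5, of A]) (simp_all add: pre44 cyc_def swp_def lastto0_def)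

lemma r44_13: "({0}, {2,3}) \<in> RS 4 4 (FL 4)"
  by (rule stepx[OF r44_5, of B]) (simp_all add: pre44 cyc_def swp_def lastto0_def)

lemma r44_14: "({0,3}, {0,2}) \<in> RS 4 4 (FL 4)"
  by (rule stepx[OF r44_6, of A]) (simp_all add: pre44 cyc_def swp_def lastto0_def)

lemma r44_15: "({0,1}, {0,1}) \<in> RS 4 4 (FL 4)"
  by (rule stepx[OF r44_6, of B]) (simp_all add: pre44 cyc_def swp_def lastto0_def)

lemma r44_16: "({0,1,3}, {1,2}) \<in> RS 4 4 (FL 4)"
  by (rule stepx[OF r44_6, of C]) (simp_all add: pre44 cyc_def swp_def lastto0_def)

lemma r44_17: "({0,1}, {1,2,3}) \<in> RS 4 4 (FL 4)"
  by (rule stepx[OF r44_7, of A]) (simp_all add: pre44 cyc_def swp_def lastto0_def)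

lemma r44_18: "({0,2}, {1,2,3}) \<in> RS 4 4 (FL 4)"
  by (rule stepx[OF r44_7, of B]) (simp_all add: pre44 cyc_def swp_def lastto0_def)

lemma r44_19: "({0,1,2}, {1}) \<in> RS 4 4 (FL 4)"
  by (rule stepx[OF r44_8, of A]) (simp_all add: pre44 cyc_def swp_def lastto0_def)

lemma r44_20: "({0,2,3}, {3}) \<in> RS 4 4 (FL 4)"
  by (rule stepx[OF r44_8, of B]) (simp_all add: pre44 cyc_def swp_def lastto0_def)

lemma r44_21: "({1,2}, {0,3}) \<in> RS 4 4 (FL 4)"
  by (rule stepx[OF r44_8, of C]) (simp_all add: pre44 cyc_def swp_def lastto0_def)

lemma r44_22: "({1,2}, {2,3}) \<in> RS 4 4 (FL 4)"
  by (rule stepx[OF r44_9, of A]) (simp_all add: pre44 cyc_def swp_def lastto0_def)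

lemma r44_23: "({2,3}, {1,2}) \<in> RS 4 4 (FL 4)"
  by (rule stepx[OF r44_9, of B]) (simp_all add: pre44 cyc_def swp_def lastto0_def)

lemma r44_24: "({2}, {2}) \<in> RS 4 4 (FL 4)"
  by (rule stepx[OF r44_9, of C]) (simp_all add: pre44 cyc_def swp_def lastto0_def)

lemma r44_25: "({0,2}, {0,2}) \<in> RS 4 4 (FL 4)"
  by (rule stepx[OF r44_10, of A]) (simp_all add: pre44 cyc_def swp_def lastto0_def)

lemma r44_26: "({0,3}, {0,1}) \<in> RS 4 4 (FL 4)"
  by (rule stepx[OF r44_10, of B]) (simp_all add: pre44 cyc_def swp_def lastto0_def)

lemma r44_27: "({1}, {1,2}) \<in> RS 4 4 (FL 4)"
  by (rule stepx[OF r44_10, of C]) (simp_all add: pre44 cyc_def swp_def lastto0_def)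

lemma r44_28: "({2,3}, {2}) \<in> RS 4 4 (FL 4)"
  by (rule stepx[OF r44_11, of A]) (simp_all add: pre44 cyc_def swp_def lastto0_def)

lemma r44_29: "({1,3}, {1}) \<in> RS 4 4 (FL 4)"
  by (rule stepx[OF r44_11, of B]) (simp_all add: pre44 cyc_def swp_def lastto0_def)

lemma r44_30: "({3}, {0,3}) \<in> RS 4 4 (FL 4)"
  by (rule stepx[OF r44_12, of A]) (simp_all add: pre44 cyc_def swp_def lastto0_def)

lemma r44_31: "({1}, {0,2}) \<in> RS 4 4 (FL 4)"
  by (rule stepx[OF r44_12, of B]) (simp_all add: pre44 cyc_def swp_def lastto0_def)

lemma r44_32: "({0,3}, {1}) \<in> RS 4 4 (FL 4)"
  by (rule stepx[OF r44_12, of C]) (simp_all add: pre44 cyc_def swp_def lastto0_def)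

lemma r44_33: "({3}, {2,3}) \<in> RS 4 4 (FL 4)"
  by (rule stepx[OF r44_13, of A]) (simp_all add: pre44 cyc_def swp_def lastto0_def)

lemma r44_34: "({1,3}, {1,3}) \<in> RS 4 4 (FL 4)"
  by (rule stepx[OF r44_14, of B]) (simp_all add: pre44 cyc_def swp_def lastto0_def)

lemma r44_35: "({0,3}, {0,2,3}) \<in> RS 4 4 (FL 4)"
  by (rule stepx[OF r44_14, of C]) (simp_all add: pre44 cyc_def swp_def lastto0_def)

lemma r44_36: "({0,1}, {0,3}) \<in> RS 4 4 (FL 4)"
  by (rule stepx[OF r44_15, of B]) (simp_all add: pre44 cyc_def swp_def lastto0_def)

lemma r44_37: "({0,1,3}, {0,1,3}) \<in> RS 4 4 (FL 4)"
  by (rule stepx[OF r44_15, of C]) (simp_all add: pre44 cyc_def swp_def lastto0_def)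

lemma r44_38: "({0,2,3}, {0,2}) \<in> RS 4 4 (FL 4)"
  by (rule stepx[OF r44_16, of A]) (simp_all add: pre44 cyc_def swp_def lastto0_def)

lemma r44_39: "({0,1,3}, {0,1}) \<in> RS 4 4 (FL 4)"
  by (rule stepx[OF r44_16, of B]) (simp_all add: pre44 cyc_def swp_def lastto0_def)

lemma r44_40: "({0,1}, {0,1,2}) \<in> RS 4 4 (FL 4)"
  by (rule stepx[OF r44_17, of B]) (simp_all add: pre44 cyc_def swp_def lastto0_def)

lemma r44_41: "({1,3}, {0,2,3}) \<in> RS 4 4 (FL 4)"
  by (rule stepx[OF r44_18, of A]) (simp_all add: pre44 cyc_def swp_def lastto0_def)

lemma r44_42: "({1,2}, {0,1,2}) \<in> RS 4 4 (FL 4)"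
  by (rule stepx[OF r44_18, of B]) (simp_all add: pre44 cyc_def swp_def lastto0_def)

lemma r44_43: "({0,2,3}, {1,2}) \<in> RS 4 4 (FL 4)"
  by (rule stepx[OF r44_18, of C]) (simp_all add: pre44 cyc_def swp_def lastto0_def)

lemma r44_44: "({0,1,3}, {0}) \<in> RS 4 4 (FL 4)"
  by (rule stepx[OF r44_19, of A]) (simp_all add: pre44 cyc_def swp_def lastto0_def)

lemma r44_45: "({0,1,2}, {0}) \<in> RS 4 4 (FL 4)"
  by (rule stepx[OF r44_19, of B]) (simp_all add: pre44 cyc_def swp_def lastto0_def)

lemma r44_46: "({0,1,2,3}, {1}) \<in> RS 4 4 (FL 4)"
  by (rule stepx[OF r44_19, of C]) (simp_all add: pre44 cyc_def swp_def lastto0_def)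

lemma r44_47: "({1,2,3}, {3}) \<in> RS 4 4 (FL 4)"
  by (rule stepx[OF r44_20, of A]) (simp_all add: pre44 cyc_def swp_def lastto0_def)

lemma r44_48: "({1,2,3}, {2}) \<in> RS 4 4 (FL 4)"
  by (rule stepx[OF r44_20, of B]) (simp_all add: pre44 cyc_def swp_def lastto0_def)

lemma r44_49: "({0,2,3}, {}) \<in> RS 4 4 (FL 4)"
  by (rule stepx[OF r44_20, of C]) (simp_all add: pre44 cyc_def swp_def lastto0_def)

lemma r44_50: "({0,1}, {1,3}) \<in> RS 4 4 (FL 4)"
  by (rule stepx[OF r44_21, of A]) (simp_all add: pre44 cyc_def swp_def lastto0_def)

lemma r44_51: "({0,2}, {2,3}) \<in> RS 4 4 (FL 4)"
  by (rule stepx[OF r44_21, of B]) (simp_all add: pre44 cyc_def swp_def lastto0_def)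

lemma r44_52: "({0,1}, {2,3}) \<in> RS 4 4 (FL 4)"
  by (rule stepx[OF r44_22, of A]) (simp_all add: pre44 cyc_def swp_def lastto0_def)

lemma r44_53: "({0,2}, {1,2}) \<in> RS 4 4 (FL 4)"
  by (rule stepx[OF r44_22, of B]) (simp_all add: pre44 cyc_def swp_def lastto0_def)

lemma r44_54: "({1,2}, {2}) \<in> RS 4 4 (FL 4)"
  by (rule stepx[OF r44_22, of C]) (simp_all add: pre44 cyc_def swp_def lastto0_def)

lemma r44_55: "({2,3}, {0,1}) \<in> RS 4 4 (FL 4)"
  by (rule stepx[OF r44_23, of B]) (simp_all add: pre44 cyc_def swp_def lastto0_def)

lemma r44_56: "({2}, {1,2}) \<in> RS 4 4 (FL 4)"
  by (rule stepx[OF r44_23, of C]) (simp_all add: pre44 cyc_def swp_def lastto0_def)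

lemma r44_57: "({1}, {2}) \<in> RS 4 4 (FL 4)"
  by (rule stepx[OF r44_24, of A]) (simp_all add: pre44 cyc_def swp_def lastto0_def)

lemma r44_58: "({2}, {1}) \<in> RS 4 4 (FL 4)"
  by (rule stepx[OF r44_24, of B]) (simp_all add: pre44 cyc_def swp_def lastto0_def)

lemma r44_59: "({1,2}, {1,3}) \<in> RS 4 4 (FL 4)"
  by (rule stepx[OF r44_25, of B]) (simp_all add: pre44 cyc_def swp_def lastto0_def)

lemma r44_60: "({0,2,3}, {0,2,3}) \<in> RS 4 4 (FL 4)"
  by (rule stepx[OF r44_25, of C]) (simp_all add: pre44 cyc_def swp_def lastto0_def)

lemma r44_61: "({0,3}, {0,1,3}) \<in> RS 4 4 (FL 4)"
  by (rule stepx[OF r44_26, of C]) (simp_all add: pre44 cyc_def swp_def lastto0_def)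

lemma r44_62: "({0}, {0,2}) \<in> RS 4 4 (FL 4)"
  by (rule stepx[OF r44_27, of A]) (simp_all add: pre44 cyc_def swp_def lastto0_def)

lemma r44_63: "({0}, {0,1}) \<in> RS 4 4 (FL 4)"
  by (rule stepx[OF r44_27, of B]) (simp_all add: pre44 cyc_def swp_def lastto0_def)

lemma r44_64: "({2,3}, {1}) \<in> RS 4 4 (FL 4)"
  by (rule stepx[OF r44_28, of B]) (simp_all add: pre44 cyc_def swp_def lastto0_def)

lemma r44_65: "({0,2}, {0}) \<in> RS 4 4 (FL 4)"
  by (rule stepx[OF r44_29, of A]) (simp_all add: pre44 cyc_def swp_def lastto0_def)

lemma r44_66: "({0,3}, {0}) \<in> RS 4 4 (FL 4)"
  by (rule stepx[OF r44_29, of B]) (simp_all add: pre44 cyc_def swp_def lastto0_def)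

lemma r44_67: "({1}, {1}) \<in> RS 4 4 (FL 4)"
  by (rule stepx[OF r44_29, of C]) (simp_all add: pre44 cyc_def swp_def lastto0_def)

lemma r44_68: "({2}, {1,3}) \<in> RS 4 4 (FL 4)"
  by (rule stepx[OF r44_30, of A]) (simp_all add: pre44 cyc_def swp_def lastto0_def)

lemma r44_69: "({}, {0,3}) \<in> RS 4 4 (FL 4)"
  by (rule stepx[OF r44_30, of C]) (simp_all add: pre44 cyc_def swp_def lastto0_def)

lemma r44_70: "({0}, {1,2}) \<in> RS 4 4 (FL 4)"
  by (rule stepx[OF r44_31, of A]) (simp_all add: pre44 cyc_def swp_def lastto0_def)

lemma r44_71: "({1}, {0,2,3}) \<in> RS 4 4 (FL 4)"
  by (rule stepx[OF r44_31, of C]) (simp_all add: pre44 cyc_def swp_def lastto0_def)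

lemma r44_72: "({2,3}, {0}) \<in> RS 4 4 (FL 4)"
  by (rule stepx[OF r44_32, of A]) (simp_all add: pre44 cyc_def swp_def lastto0_def)

lemma r44_73: "({1,3}, {0}) \<in> RS 4 4 (FL 4)"
  by (rule stepx[OF r44_32, of B]) (simp_all add: pre44 cyc_def swp_def lastto0_def)

lemma r44_74: "({2}, {2,3}) \<in> RS 4 4 (FL 4)"
  by (rule stepx[OF r44_33, of A]) (simp_all add: pre44 cyc_def swp_def lastto0_def)

lemma r44_75: "({3}, {1,2}) \<in> RS 4 4 (FL 4)"
  by (rule stepx[OF r44_33, of B]) (simp_all add: pre44 cyc_def swp_def lastto0_def)

lemma r44_76: "({}, {2}) \<in> RS 4 4 (FL 4)"
  by (rule stepx[OF r44_33, of C]) (simp_all add: pre44 cyc_def swp_def lastto0_def)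

lemma r44_77: "({0,2}, {0,3}) \<in> RS 4 4 (FL 4)"
  by (rule stepx[OF r44_34, of A]) (simp_all add: pre44 cyc_def swp_def lastto0_def)

lemma r44_78: "({2,3}, {1,2,3}) \<in> RS 4 4 (FL 4)"
  by (rule stepx[OF r44_35, of A]) (simp_all add: pre44 cyc_def swp_def lastto0_def)

lemma r44_79: "({1,3}, {1,2,3}) \<in> RS 4 4 (FL 4)"
  by (rule stepx[OF r44_35, of B]) (simp_all add: pre44 cyc_def swp_def lastto0_def)

lemma r44_80: "({0,3}, {1,3}) \<in> RS 4 4 (FL 4)"
  by (rule stepx[OF r44_36, of A]) (simp_all add: pre44 cyc_def swp_def lastto0_def)

lemma r44_81: "({0,1,3}, {0,3}) \<in> RS 4 4 (FL 4)"
  by (rule stepx[OF r44_36, of C]) (simp_all add: pre44 cyc_def swp_def lastto0_def)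

lemma r44_82: "({0,2,3}, {0,1,3}) \<in> RS 4 4 (FL 4)"
  by (rule stepx[OF r44_37, of A]) (simp_all add: pre44 cyc_def swp_def lastto0_def)

lemma r44_83: "({0,1,3}, {0,2,3}) \<in> RS 4 4 (FL 4)"
  by (rule stepx[OF r44_37, of B]) (simp_all add: pre44 cyc_def swp_def lastto0_def)

lemma r44_84: "({1,2,3}, {1,2}) \<in> RS 4 4 (FL 4)"
  by (rule stepx[OF r44_38, of A]) (simp_all add: pre44 cyc_def swp_def lastto0_def)

lemma r44_85: "({1,2,3}, {1,3}) \<in> RS 4 4 (FL 4)"
  by (rule stepx[OF r44_38, of B]) (simp_all add: pre44 cyc_def swp_def lastto0_def)

lemma r44_86: "({0,2,3}, {0,1}) \<in> RS 4 4 (FL 4)"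
  by (rule stepx[OF r44_39, of A]) (simp_all add: pre44 cyc_def swp_def lastto0_def)

lemma r44_87: "({0,3}, {0,1,2}) \<in> RS 4 4 (FL 4)"
  by (rule stepx[OF r44_40, of A]) (simp_all add: pre44 cyc_def swp_def lastto0_def)

lemma r44_88: "({0,1}, {0,1,3}) \<in> RS 4 4 (FL 4)"
  by (rule stepx[OF r44_40, of B]) (simp_all add: pre44 cyc_def swp_def lastto0_def)

lemma r44_89: "({0,1,3}, {0,1,2,3}) \<in> RS 4 4 (FL 4)"
  by (rule stepx[OF r44_40, of C]) (simp_all add: pre44 cyc_def swp_def lastto0_def)

lemma r44_90: "({0,3}, {1,2,3}) \<in> RS 4 4 (FL 4)"
  by (rule stepx[OF r44_41, of B]) (simp_all add: pre44 cyc_def swp_def lastto0_def)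

lemma r44_91: "({0,2}, {0,1,3}) \<in> RS 4 4 (FL 4)"
  by (rule stepx[OF r44_42, of B]) (simp_all add: pre44 cyc_def swp_def lastto0_def)

lemma r44_92: "({1,2}, {0,1,2,3}) \<in> RS 4 4 (FL 4)"
  by (rule stepx[OF r44_42, of C]) (simp_all add: pre44 cyc_def swp_def lastto0_def)

lemma r44_93: "({1,2,3}, {0,2}) \<in> RS 4 4 (FL 4)"
  by (rule stepx[OF r44_43, of A]) (simp_all add: pre44 cyc_def swp_def lastto0_def)

lemma r44_94: "({1,2,3}, {0,1}) \<in> RS 4 4 (FL 4)"
  by (rule stepx[OF r44_43, of B]) (simp_all add: pre44 cyc_def swp_def lastto0_def)

lemma r44_95: "({0,1,3}, {3}) \<in> RS 4 4 (FL 4)"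
  by (rule stepx[OF r44_44, of B]) (simp_all add: pre44 cyc_def swp_def lastto0_def)

lemma r44_96: "({0,1,3}, {1}) \<in> RS 4 4 (FL 4)"
  by (rule stepx[OF r44_45, of A]) (simp_all add: pre44 cyc_def swp_def lastto0_def)

lemma r44_97: "({0,1,2}, {3}) \<in> RS 4 4 (FL 4)"
  by (rule stepx[OF r44_45, of B]) (simp_all add: pre44 cyc_def swp_def lastto0_def)

lemma r44_98: "({0,1,2,3}, {0,3}) \<in> RS 4 4 (FL 4)"
  by (rule stepx[OF r44_45, of C]) (simp_all add: pre44 cyc_def swp_def lastto0_def)

lemma r44_99: "({0,1,2,3}, {0}) \<in> RS 4 4 (FL 4)"
  by (rule stepx[OF r44_46, of A]) (simp_all add: pre44 cyc_def swp_def lastto0_def)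

lemma r44_100: "({0,2,3}, {2}) \<in> RS 4 4 (FL 4)"
  by (rule stepx[OF r44_47, of B]) (simp_all add: pre44 cyc_def swp_def lastto0_def)

lemma r44_101: "({1,2}, {}) \<in> RS 4 4 (FL 4)"
  by (rule stepx[OF r44_47, of C]) (simp_all add: pre44 cyc_def swp_def lastto0_def)

lemma r44_102: "({0,1,2}, {2}) \<in> RS 4 4 (FL 4)"
  by (rule stepx[OF r44_48, of A]) (simp_all add: pre44 cyc_def swp_def lastto0_def)

lemma r44_103: "({1,2,3}, {}) \<in> RS 4 4 (FL 4)"
  by (rule stepx[OF r44_49, of A]) (simp_all add: pre44 cyc_def swp_def lastto0_def)

lemma r44_104: "({0,3}, {0,3}) \<in> RS 4 4 (FL 4)"
  by (rule stepx[OF r44_50, of A]) (simp_all add: pre44 cyc_def swp_def lastto0_def)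

lemma r44_105: "({0,1}, {0,2}) \<in> RS 4 4 (FL 4)"
  by (rule stepx[OF r44_50, of B]) (simp_all add: pre44 cyc_def swp_def lastto0_def)

lemma r44_106: "({1,3}, {2,3}) \<in> RS 4 4 (FL 4)"
  by (rule stepx[OF r44_51, of A]) (simp_all add: pre44 cyc_def swp_def lastto0_def)

lemma r44_107: "({1,2}, {1,2}) \<in> RS 4 4 (FL 4)"
  by (rule stepx[OF r44_51, of B]) (simp_all add: pre44 cyc_def swp_def lastto0_def)

lemma r44_108: "({0,1,3}, {2}) \<in> RS 4 4 (FL 4)"
  by (rule stepx[OF r44_52, of C]) (simp_all add: pre44 cyc_def swp_def lastto0_def)

lemma r44_109: "({1,3}, {0,2}) \<in> RS 4 4 (FL 4)"
  by (rule stepx[OF r44_53, of A]) (simp_all add: pre44 cyc_def swp_def lastto0_def)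

lemma r44_110: "({1,2}, {0,1}) \<in> RS 4 4 (FL 4)"
  by (rule stepx[OF r44_53, of B]) (simp_all add: pre44 cyc_def swp_def lastto0_def)

lemma r44_111: "({0,1}, {2}) \<in> RS 4 4 (FL 4)"
  by (rule stepx[OF r44_54, of A]) (simp_all add: pre44 cyc_def swp_def lastto0_def)

lemma r44_112: "({0,2}, {1}) \<in> RS 4 4 (FL 4)"
  by (rule stepx[OF r44_54, of B]) (simp_all add: pre44 cyc_def swp_def lastto0_def)

lemma r44_113: "({2,3}, {0,3}) \<in> RS 4 4 (FL 4)"
  by (rule stepx[OF r44_55, of B]) (simp_all add: pre44 cyc_def swp_def lastto0_def)

lemma r44_114: "({2}, {0,1,3}) \<in> RS 4 4 (FL 4)"
  by (rule stepx[OF r44_55, of C]) (simp_all add: pre44 cyc_def swp_def lastto0_def)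

lemma r44_115: "({2}, {0,1}) \<in> RS 4 4 (FL 4)"
  by (rule stepx[OF r44_56, of B]) (simp_all add: pre44 cyc_def swp_def lastto0_def)

lemma r44_116: "({0}, {2}) \<in> RS 4 4 (FL 4)"
  by (rule stepx[OF r44_57, of A]) (simp_all add: pre44 cyc_def swp_def lastto0_def)

lemma r44_117: "({0}, {1}) \<in> RS 4 4 (FL 4)"
  by (rule stepx[OF r44_57, of B]) (simp_all add: pre44 cyc_def swp_def lastto0_def)

lemma r44_118: "({1}, {0}) \<in> RS 4 4 (FL 4)"
  by (rule stepx[OF r44_58, of A]) (simp_all add: pre44 cyc_def swp_def lastto0_def)

lemma r44_119: "({2}, {0}) \<in> RS 4 4 (FL 4)"
  by (rule stepx[OF r44_58, of B]) (simp_all add: pre44 cyc_def swp_def lastto0_def)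

lemma r44_120: "({1,2}, {1}) \<in> RS 4 4 (FL 4)"
  by (rule stepx[OF r44_59, of C]) (simp_all add: pre44 cyc_def swp_def lastto0_def)

lemma r44_121: "({1,2,3}, {1,2,3}) \<in> RS 4 4 (FL 4)"
  by (rule stepx[OF r44_60, of A]) (simp_all add: pre44 cyc_def swp_def lastto0_def)

lemma r44_122: "({2,3}, {0,1,3}) \<in> RS 4 4 (FL 4)"
  by (rule stepx[OF r44_61, of A]) (simp_all add: pre44 cyc_def swp_def lastto0_def)

lemma r44_123: "({1}, {1,3}) \<in> RS 4 4 (FL 4)"
  by (rule stepx[OF r44_62, of B]) (simp_all add: pre44 cyc_def swp_def lastto0_def)

lemma r44_124: "({3}, {0,1}) \<in> RS 4 4 (FL 4)"
  by (rule stepx[OF r44_63, of A]) (simp_all add: pre44 cyc_def swp_def lastto0_def)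

lemma r44_125: "({1,2}, {0}) \<in> RS 4 4 (FL 4)"
  by (rule stepx[OF r44_64, of A]) (simp_all add: pre44 cyc_def swp_def lastto0_def)

lemma r44_126: "({1,2}, {3}) \<in> RS 4 4 (FL 4)"
  by (rule stepx[OF r44_65, of B]) (simp_all add: pre44 cyc_def swp_def lastto0_def)

lemma r44_127: "({0,2,3}, {0,3}) \<in> RS 4 4 (FL 4)"
  by (rule stepx[OF r44_65, of C]) (simp_all add: pre44 cyc_def swp_def lastto0_def)

lemma r44_128: "({1,3}, {3}) \<in> RS 4 4 (FL 4)"
  by (rule stepx[OF r44_66, of B]) (simp_all add: pre44 cyc_def swp_def lastto0_def)

lemma r44_129: "({0}, {0}) \<in> RS 4 4 (FL 4)"
  by (rule stepx[OF r44_67, of A]) (simp_all add: pre44 cyc_def swp_def lastto0_def)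

lemma r44_130: "({2}, {0,2}) \<in> RS 4 4 (FL 4)"
  by (rule stepx[OF r44_68, of B]) (simp_all add: pre44 cyc_def swp_def lastto0_def)

lemma r44_131: "({}, {1,3}) \<in> RS 4 4 (FL 4)"
  by (rule stepx[OF r44_69, of A]) (simp_all add: pre44 cyc_def swp_def lastto0_def)

lemma r44_132: "({}, {2,3}) \<in> RS 4 4 (FL 4)"
  by (rule stepx[OF r44_69, of B]) (simp_all add: pre44 cyc_def swp_def lastto0_def)

lemma r44_133: "({3}, {0,2}) \<in> RS 4 4 (FL 4)"
  by (rule stepx[OF r44_70, of A]) (simp_all add: pre44 cyc_def swp_def lastto0_def)

lemma r44_134: "({1}, {0,1}) \<in> RS 4 4 (FL 4)"
  by (rule stepx[OF r44_70, of B]) (simp_all add: pre44 cyc_def swp_def lastto0_def)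

lemma r44_135: "({0,3}, {1,2}) \<in> RS 4 4 (FL 4)"
  by (rule stepx[OF r44_70, of C]) (simp_all add: pre44 cyc_def swp_def lastto0_def)

lemma r44_136: "({0}, {1,2,3}) \<in> RS 4 4 (FL 4)"
  by (rule stepx[OF r44_71, of A]) (simp_all add: pre44 cyc_def swp_def lastto0_def)

lemma r44_137: "({2,3}, {3}) \<in> RS 4 4 (FL 4)"
  by (rule stepx[OF r44_72, of B]) (simp_all add: pre44 cyc_def swp_def lastto0_def)

lemma r44_138: "({2}, {0,3}) \<in> RS 4 4 (FL 4)"
  by (rule stepx[OF r44_72, of C]) (simp_all add: pre44 cyc_def swp_def lastto0_def)

lemma r44_139: "({0,3}, {3}) \<in> RS 4 4 (FL 4)"
  by (rule stepx[OF r44_73, of B]) (simp_all add: pre44 cyc_def swp_def lastto0_def)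

lemma r44_140: "({1}, {2,3}) \<in> RS 4 4 (FL 4)"
  by (rule stepx[OF r44_74, of A]) (simp_all add: pre44 cyc_def swp_def lastto0_def)

lemma r44_141: "({}, {1,2}) \<in> RS 4 4 (FL 4)"
  by (rule stepx[OF r44_75, of C]) (simp_all add: pre44 cyc_def swp_def lastto0_def)

lemma r44_142: "({}, {1}) \<in> RS 4 4 (FL 4)"
  by (rule stepx[OF r44_76, of B]) (simp_all add: pre44 cyc_def swp_def lastto0_def)

lemma r44_143: "({2,3}, {0,1,2}) \<in> RS 4 4 (FL 4)"
  by (rule stepx[OF r44_78, of B]) (simp_all add: pre44 cyc_def swp_def lastto0_def)

lemma r44_144: "({0,2}, {0,2,3}) \<in> RS 4 4 (FL 4)"
  by (rule stepx[OF r44_79, of A]) (simp_all add: pre44 cyc_def swp_def lastto0_def)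

lemma r44_145: "({0,2,3}, {1,3}) \<in> RS 4 4 (FL 4)"
  by (rule stepx[OF r44_81, of A]) (simp_all add: pre44 cyc_def swp_def lastto0_def)

lemma r44_146: "({0,1,3}, {2,3}) \<in> RS 4 4 (FL 4)"
  by (rule stepx[OF r44_81, of B]) (simp_all add: pre44 cyc_def swp_def lastto0_def)

lemma r44_147: "({1,2,3}, {0,1,3}) \<in> RS 4 4 (FL 4)"
  by (rule stepx[OF r44_82, of A]) (simp_all add: pre44 cyc_def swp_def lastto0_def)

lemma r44_148: "({1,2,3}, {0,2,3}) \<in> RS 4 4 (FL 4)"
  by (rule stepx[OF r44_82, of B]) (simp_all add: pre44 cyc_def swp_def lastto0_def)

lemma r44_149: "({0,2,3}, {1,2,3}) \<in> RS 4 4 (FL 4)"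
  by (rule stepx[OF r44_83, of A]) (simp_all add: pre44 cyc_def swp_def lastto0_def)

lemma r44_150: "({0,1,3}, {1,2,3}) \<in> RS 4 4 (FL 4)"
  by (rule stepx[OF r44_83, of B]) (simp_all add: pre44 cyc_def swp_def lastto0_def)

lemma r44_151: "({0,1,2}, {0,2}) \<in> RS 4 4 (FL 4)"
  by (rule stepx[OF r44_84, of A]) (simp_all add: pre44 cyc_def swp_def lastto0_def)

lemma r44_152: "({0,1,2}, {0,3}) \<in> RS 4 4 (FL 4)"
  by (rule stepx[OF r44_85, of A]) (simp_all add: pre44 cyc_def swp_def lastto0_def)

lemma r44_153: "({1,2,3}, {0,3}) \<in> RS 4 4 (FL 4)"
  by (rule stepx[OF r44_86, of B]) (simp_all add: pre44 cyc_def swp_def lastto0_def)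

lemma r44_154: "({1,3}, {0,1,3}) \<in> RS 4 4 (FL 4)"
  by (rule stepx[OF r44_87, of B]) (simp_all add: pre44 cyc_def swp_def lastto0_def)

lemma r44_155: "({0,3}, {0,1,2,3}) \<in> RS 4 4 (FL 4)"
  by (rule stepx[OF r44_87, of C]) (simp_all add: pre44 cyc_def swp_def lastto0_def)

lemma r44_156: "({0,1}, {0,2,3}) \<in> RS 4 4 (FL 4)"
  by (rule stepx[OF r44_88, of B]) (simp_all add: pre44 cyc_def swp_def lastto0_def)

lemma r44_157: "({0,2,3}, {0,1,2,3}) \<in> RS 4 4 (FL 4)"
  by (rule stepx[OF r44_89, of A]) (simp_all add: pre44 cyc_def swp_def lastto0_def)

lemma r44_158: "({2,3}, {0,2,3}) \<in> RS 4 4 (FL 4)"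
  by (rule stepx[OF r44_90, of A]) (simp_all add: pre44 cyc_def swp_def lastto0_def)

lemma r44_159: "({1,3}, {0,1,2}) \<in> RS 4 4 (FL 4)"
  by (rule stepx[OF r44_90, of B]) (simp_all add: pre44 cyc_def swp_def lastto0_def)

lemma r44_160: "({0,1}, {0,1,2,3}) \<in> RS 4 4 (FL 4)"
  by (rule stepx[OF r44_92, of A]) (simp_all add: pre44 cyc_def swp_def lastto0_def)

lemma r44_161: "({0,2}, {0,1,2,3}) \<in> RS 4 4 (FL 4)"
  by (rule stepx[OF r44_92, of B]) (simp_all add: pre44 cyc_def swp_def lastto0_def)

lemma r44_162: "({0,1,2}, {1,2}) \<in> RS 4 4 (FL 4)"
  by (rule stepx[OF r44_93, of A]) (simp_all add: pre44 cyc_def swp_def lastto0_def)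

lemma r44_163: "({0,1,2}, {0,1}) \<in> RS 4 4 (FL 4)"
  by (rule stepx[OF r44_94, of A]) (simp_all add: pre44 cyc_def swp_def lastto0_def)

lemma r44_164: "({1,2}, {0,1,3}) \<in> RS 4 4 (FL 4)"
  by (rule stepx[OF r44_94, of C]) (simp_all add: pre44 cyc_def swp_def lastto0_def)

lemma r44_165: "({0,1,3}, {}) \<in> RS 4 4 (FL 4)"
  by (rule stepx[OF r44_95, of C]) (simp_all add: pre44 cyc_def swp_def lastto0_def)

lemma r44_166: "({0,2,3}, {0}) \<in> RS 4 4 (FL 4)"
  by (rule stepx[OF r44_96, of A]) (simp_all add: pre44 cyc_def swp_def lastto0_def)

lemma r44_167: "({0,1,2,3}, {}) \<in> RS 4 4 (FL 4)"
  by (rule stepx[OF r44_97, of C]) (simp_all add: pre44 cyc_def swp_def lastto0_def)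

lemma r44_168: "({0,1,2,3}, {1,3}) \<in> RS 4 4 (FL 4)"
  by (rule stepx[OF r44_98, of A]) (simp_all add: pre44 cyc_def swp_def lastto0_def)

lemma r44_169: "({0,1,2,3}, {2,3}) \<in> RS 4 4 (FL 4)"
  by (rule stepx[OF r44_98, of B]) (simp_all add: pre44 cyc_def swp_def lastto0_def)

lemma r44_170: "({0,1,2,3}, {3}) \<in> RS 4 4 (FL 4)"
  by (rule stepx[OF r44_99, of B]) (simp_all add: pre44 cyc_def swp_def lastto0_def)

lemma r44_171: "({1,2,3}, {1}) \<in> RS 4 4 (FL 4)"
  by (rule stepx[OF r44_100, of B]) (simp_all add: pre44 cyc_def swp_def lastto0_def)

lemma r44_172: "({0,1}, {}) \<in> RS 4 4 (FL 4)"
  by (rule stepx[OF r44_101, of A]) (simp_all add: pre44 cyc_def swp_def lastto0_def)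

lemma r44_173: "({0,2}, {}) \<in> RS 4 4 (FL 4)"
  by (rule stepx[OF r44_101, of B]) (simp_all add: pre44 cyc_def swp_def lastto0_def)

lemma r44_174: "({0,1,2,3}, {2}) \<in> RS 4 4 (FL 4)"
  by (rule stepx[OF r44_102, of C]) (simp_all add: pre44 cyc_def swp_def lastto0_def)

lemma r44_175: "({0,1,2}, {}) \<in> RS 4 4 (FL 4)"
  by (rule stepx[OF r44_103, of A]) (simp_all add: pre44 cyc_def swp_def lastto0_def)

lemma r44_176: "({2,3}, {1,3}) \<in> RS 4 4 (FL 4)"
  by (rule stepx[OF r44_104, of A]) (simp_all add: pre44 cyc_def swp_def lastto0_def)

lemma r44_177: "({0,2}, {0,1}) \<in> RS 4 4 (FL 4)"
  by (rule stepx[OF r44_107, of B]) (simp_all add: pre44 cyc_def swp_def lastto0_def)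

lemma r44_178: "({0,1}, {1}) \<in> RS 4 4 (FL 4)"
  by (rule stepx[OF r44_111, of B]) (simp_all add: pre44 cyc_def swp_def lastto0_def)

lemma r44_179: "({1}, {0,1,3}) \<in> RS 4 4 (FL 4)"
  by (rule stepx[OF r44_114, of A]) (simp_all add: pre44 cyc_def swp_def lastto0_def)

lemma r44_180: "({2}, {0,2,3}) \<in> RS 4 4 (FL 4)"
  by (rule stepx[OF r44_114, of B]) (simp_all add: pre44 cyc_def swp_def lastto0_def)

lemma r44_181: "({3}, {2}) \<in> RS 4 4 (FL 4)"
  by (rule stepx[OF r44_116, of A]) (simp_all add: pre44 cyc_def swp_def lastto0_def)

lemma r44_182: "({3}, {0}) \<in> RS 4 4 (FL 4)"
  by (rule stepx[OF r44_117, of A]) (simp_all add: pre44 cyc_def swp_def lastto0_def)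

lemma r44_183: "({0}, {3}) \<in> RS 4 4 (FL 4)"
  by (rule stepx[OF r44_118, of B]) (simp_all add: pre44 cyc_def swp_def lastto0_def)

lemma r44_184: "({2}, {3}) \<in> RS 4 4 (FL 4)"
  by (rule stepx[OF r44_119, of B]) (simp_all add: pre44 cyc_def swp_def lastto0_def)

lemma r44_185: "({0,1}, {0}) \<in> RS 4 4 (FL 4)"
  by (rule stepx[OF r44_120, of A]) (simp_all add: pre44 cyc_def swp_def lastto0_def)

lemma r44_186: "({0,1,2}, {0,2,3}) \<in> RS 4 4 (FL 4)"
  by (rule stepx[OF r44_121, of A]) (simp_all add: pre44 cyc_def swp_def lastto0_def)

lemma r44_187: "({0,2,3}, {0,1,2}) \<in> RS 4 4 (FL 4)"
  by (rule stepx[OF r44_121, of B]) (simp_all add: pre44 cyc_def swp_def lastto0_def)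

lemma r44_188: "({0}, {0,3}) \<in> RS 4 4 (FL 4)"
  by (rule stepx[OF r44_123, of A]) (simp_all add: pre44 cyc_def swp_def lastto0_def)

lemma r44_189: "({}, {0,1,3}) \<in> RS 4 4 (FL 4)"
  by (rule stepx[OF r44_124, of C]) (simp_all add: pre44 cyc_def swp_def lastto0_def)

lemma r44_190: "({0,2}, {3}) \<in> RS 4 4 (FL 4)"
  by (rule stepx[OF r44_125, of B]) (simp_all add: pre44 cyc_def swp_def lastto0_def)

lemma r44_191: "({0,1}, {3}) \<in> RS 4 4 (FL 4)"
  by (rule stepx[OF r44_126, of A]) (simp_all add: pre44 cyc_def swp_def lastto0_def)

lemma r44_192: "({0,2}, {2}) \<in> RS 4 4 (FL 4)"
  by (rule stepx[OF r44_126, of B]) (simp_all add: pre44 cyc_def swp_def lastto0_def)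

lemma r44_193: "({1,2,3}, {2,3}) \<in> RS 4 4 (FL 4)"
  by (rule stepx[OF r44_127, of B]) (simp_all add: pre44 cyc_def swp_def lastto0_def)

lemma r44_194: "({1}, {}) \<in> RS 4 4 (FL 4)"
  by (rule stepx[OF r44_128, of C]) (simp_all add: pre44 cyc_def swp_def lastto0_def)

lemma r44_195: "({3}, {1}) \<in> RS 4 4 (FL 4)"
  by (rule stepx[OF r44_129, of A]) (simp_all add: pre44 cyc_def swp_def lastto0_def)

lemma r44_196: "({1}, {3}) \<in> RS 4 4 (FL 4)"
  by (rule stepx[OF r44_129, of B]) (simp_all add: pre44 cyc_def swp_def lastto0_def)

lemma r44_197: "({}, {0,2}) \<in> RS 4 4 (FL 4)"
  by (rule stepx[OF r44_131, of B]) (simp_all add: pre44 cyc_def swp_def lastto0_def)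

lemma r44_198: "({3}, {1,3}) \<in> RS 4 4 (FL 4)"
  by (rule stepx[OF r44_133, of B]) (simp_all add: pre44 cyc_def swp_def lastto0_def)

lemma r44_199: "({}, {0,2,3}) \<in> RS 4 4 (FL 4)"
  by (rule stepx[OF r44_133, of C]) (simp_all add: pre44 cyc_def swp_def lastto0_def)

lemma r44_200: "({2,3}, {0,2}) \<in> RS 4 4 (FL 4)"
  by (rule stepx[OF r44_135, of A]) (simp_all add: pre44 cyc_def swp_def lastto0_def)

lemma r44_201: "({1,3}, {0,1}) \<in> RS 4 4 (FL 4)"
  by (rule stepx[OF r44_135, of B]) (simp_all add: pre44 cyc_def swp_def lastto0_def)

lemma r44_202: "({3}, {0,2,3}) \<in> RS 4 4 (FL 4)"
  by (rule stepx[OF r44_136, of A]) (simp_all add: pre44 cyc_def swp_def lastto0_def)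

lemma r44_203: "({1}, {0,1,2}) \<in> RS 4 4 (FL 4)"
  by (rule stepx[OF r44_136, of B]) (simp_all add: pre44 cyc_def swp_def lastto0_def)

lemma r44_204: "({2}, {}) \<in> RS 4 4 (FL 4)"
  by (rule stepx[OF r44_137, of C]) (simp_all add: pre44 cyc_def swp_def lastto0_def)

lemma r44_205: "({1,3}, {2}) \<in> RS 4 4 (FL 4)"
  by (rule stepx[OF r44_139, of B]) (simp_all add: pre44 cyc_def swp_def lastto0_def)

lemma r44_206: "({0,3}, {}) \<in> RS 4 4 (FL 4)"
  by (rule stepx[OF r44_139, of C]) (simp_all add: pre44 cyc_def swp_def lastto0_def)

lemma r44_207: "({}, {0,1}) \<in> RS 4 4 (FL 4)"
  by (rule stepx[OF r44_141, of B]) (simp_all add: pre44 cyc_def swp_def lastto0_def)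

lemma r44_208: "({}, {0}) \<in> RS 4 4 (FL 4)"
  by (rule stepx[OF r44_142, of A]) (simp_all add: pre44 cyc_def swp_def lastto0_def)

lemma r44_209: "({2}, {0,1,2,3}) \<in> RS 4 4 (FL 4)"
  by (rule stepx[OF r44_143, of C]) (simp_all add: pre44 cyc_def swp_def lastto0_def)

lemma r44_210: "({1,2}, {1,2,3}) \<in> RS 4 4 (FL 4)"
  by (rule stepx[OF r44_144, of B]) (simp_all add: pre44 cyc_def swp_def lastto0_def)

lemma r44_211: "({0,2,3}, {2,3}) \<in> RS 4 4 (FL 4)"
  by (rule stepx[OF r44_146, of A]) (simp_all add: pre44 cyc_def swp_def lastto0_def)

lemma r44_212: "({0,1,2}, {0,1,3}) \<in> RS 4 4 (FL 4)"
  by (rule stepx[OF r44_147, of A]) (simp_all add: pre44 cyc_def swp_def lastto0_def)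

lemma r44_213: "({0,1,2}, {1,2,3}) \<in> RS 4 4 (FL 4)"
  by (rule stepx[OF r44_148, of A]) (simp_all add: pre44 cyc_def swp_def lastto0_def)

lemma r44_214: "({1,2,3}, {0,1,2}) \<in> RS 4 4 (FL 4)"
  by (rule stepx[OF r44_149, of B]) (simp_all add: pre44 cyc_def swp_def lastto0_def)

lemma r44_215: "({0,1,3}, {0,1,2}) \<in> RS 4 4 (FL 4)"
  by (rule stepx[OF r44_150, of B]) (simp_all add: pre44 cyc_def swp_def lastto0_def)

lemma r44_216: "({0,1,2}, {1,3}) \<in> RS 4 4 (FL 4)"
  by (rule stepx[OF r44_151, of B]) (simp_all add: pre44 cyc_def swp_def lastto0_def)

lemma r44_217: "({0,1,2,3}, {0,2,3}) \<in> RS 4 4 (FL 4)"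
  by (rule stepx[OF r44_151, of C]) (simp_all add: pre44 cyc_def swp_def lastto0_def)

lemma r44_218: "({0,1,3}, {1,3}) \<in> RS 4 4 (FL 4)"
  by (rule stepx[OF r44_152, of A]) (simp_all add: pre44 cyc_def swp_def lastto0_def)

lemma r44_219: "({0,1,2}, {2,3}) \<in> RS 4 4 (FL 4)"
  by (rule stepx[OF r44_152, of B]) (simp_all add: pre44 cyc_def swp_def lastto0_def)

lemma r44_220: "({2,3}, {0,1,2,3}) \<in> RS 4 4 (FL 4)"
  by (rule stepx[OF r44_155, of A]) (simp_all add: pre44 cyc_def swp_def lastto0_def)

lemma r44_221: "({1,3}, {0,1,2,3}) \<in> RS 4 4 (FL 4)"
  by (rule stepx[OF r44_155, of B]) (simp_all add: pre44 cyc_def swp_def lastto0_def)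

lemma r44_222: "({1,2,3}, {0,1,2,3}) \<in> RS 4 4 (FL 4)"
  by (rule stepx[OF r44_157, of A]) (simp_all add: pre44 cyc_def swp_def lastto0_def)

lemma r44_223: "({0,2}, {0,1,2}) \<in> RS 4 4 (FL 4)"
  by (rule stepx[OF r44_159, of A]) (simp_all add: pre44 cyc_def swp_def lastto0_def)

lemma r44_224: "({1}, {0,1,2,3}) \<in> RS 4 4 (FL 4)"
  by (rule stepx[OF r44_159, of C]) (simp_all add: pre44 cyc_def swp_def lastto0_def)

lemma r44_225: "({0,1,3}, {0,2}) \<in> RS 4 4 (FL 4)"
  by (rule stepx[OF r44_162, of A]) (simp_all add: pre44 cyc_def swp_def lastto0_def)

lemma r44_226: "({0,1,2,3}, {1,2}) \<in> RS 4 4 (FL 4)"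
  by (rule stepx[OF r44_162, of C]) (simp_all add: pre44 cyc_def swp_def lastto0_def)

lemma r44_227: "({0,1,2,3}, {0,1,3}) \<in> RS 4 4 (FL 4)"
  by (rule stepx[OF r44_163, of C]) (simp_all add: pre44 cyc_def swp_def lastto0_def)

lemma r44_228: "({0,1,2,3}, {0,2}) \<in> RS 4 4 (FL 4)"
  by (rule stepx[OF r44_168, of B]) (simp_all add: pre44 cyc_def swp_def lastto0_def)

lemma r44_229: "({1,3}, {}) \<in> RS 4 4 (FL 4)"
  by (rule stepx[OF r44_173, of A]) (simp_all add: pre44 cyc_def swp_def lastto0_def)

lemma r44_230: "({0}, {0,1,3}) \<in> RS 4 4 (FL 4)"
  by (rule stepx[OF r44_179, of A]) (simp_all add: pre44 cyc_def swp_def lastto0_def)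

lemma r44_231: "({0}, {0,2,3}) \<in> RS 4 4 (FL 4)"
  by (rule stepx[OF r44_179, of B]) (simp_all add: pre44 cyc_def swp_def lastto0_def)

lemma r44_232: "({1}, {1,2,3}) \<in> RS 4 4 (FL 4)"
  by (rule stepx[OF r44_180, of A]) (simp_all add: pre44 cyc_def swp_def lastto0_def)

lemma r44_233: "({2}, {1,2,3}) \<in> RS 4 4 (FL 4)"
  by (rule stepx[OF r44_180, of B]) (simp_all add: pre44 cyc_def swp_def lastto0_def)

lemma r44_234: "({3}, {3}) \<in> RS 4 4 (FL 4)"
  by (rule stepx[OF r44_182, of B]) (simp_all add: pre44 cyc_def swp_def lastto0_def)

lemma r44_235: "({0}, {}) \<in> RS 4 4 (FL 4)"
  by (rule stepx[OF r44_194, of A]) (simp_all add: pre44 cyc_def swp_def lastto0_def)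

lemma r44_236: "({}, {1,2,3}) \<in> RS 4 4 (FL 4)"
  by (rule stepx[OF r44_199, of A]) (simp_all add: pre44 cyc_def swp_def lastto0_def)

lemma r44_237: "({3}, {1,2,3}) \<in> RS 4 4 (FL 4)"
  by (rule stepx[OF r44_202, of B]) (simp_all add: pre44 cyc_def swp_def lastto0_def)

lemma r44_238: "({0}, {0,1,2}) \<in> RS 4 4 (FL 4)"
  by (rule stepx[OF r44_203, of A]) (simp_all add: pre44 cyc_def swp_def lastto0_def)

lemma r44_239: "({2,3}, {}) \<in> RS 4 4 (FL 4)"
  by (rule stepx[OF r44_206, of A]) (simp_all add: pre44 cyc_def swp_def lastto0_def)

lemma r44_240: "({}, {3}) \<in> RS 4 4 (FL 4)"
  by (rule stepx[OF r44_208, of B]) (simp_all add: pre44 cyc_def swp_def lastto0_def)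

lemma r44_241: "({0,1,2}, {0,1,2}) \<in> RS 4 4 (FL 4)"
  by (rule stepx[OF r44_213, of B]) (simp_all add: pre44 cyc_def swp_def lastto0_def)

lemma r44_242: "({0,1,2,3}, {1,2,3}) \<in> RS 4 4 (FL 4)"
  by (rule stepx[OF r44_217, of A]) (simp_all add: pre44 cyc_def swp_def lastto0_def)

lemma r44_243: "({0,1,2}, {0,1,2,3}) \<in> RS 4 4 (FL 4)"
  by (rule stepx[OF r44_222, of A]) (simp_all add: pre44 cyc_def swp_def lastto0_def)

lemma r44_244: "({0}, {0,1,2,3}) \<in> RS 4 4 (FL 4)"
  by (rule stepx[OF r44_224, of A]) (simp_all add: pre44 cyc_def swp_def lastto0_def)

lemma r44_245: "({0,1,2,3}, {0,1}) \<in> RS 4 4 (FL 4)"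
  by (rule stepx[OF r44_226, of B]) (simp_all add: pre44 cyc_def swp_def lastto0_def)

lemma r44_246: "({3}, {0,1,3}) \<in> RS 4 4 (FL 4)"
  by (rule stepx[OF r44_230, of A]) (simp_all add: pre44 cyc_def swp_def lastto0_def)

lemma r44_247: "({2}, {0,1,2}) \<in> RS 4 4 (FL 4)"
  by (rule stepx[OF r44_233, of B]) (simp_all add: pre44 cyc_def swp_def lastto0_def)

lemma r44_248: "({}, {}) \<in> RS 4 4 (FL 4)"
  by (rule stepx[OF r44_234, of C]) (simp_all add: pre44 cyc_def swp_def lastto0_def)

lemma r44_249: "({3}, {}) \<in> RS 4 4 (FL 4)"
  by (rule stepx[OF r44_235, of A]) (simp_all add: pre44 cyc_def swp_def lastto0_def)

lemma r44_250: "({}, {0,1,2}) \<in> RS 4 4 (FL 4)"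
  by (rule stepx[OF r44_236, of B]) (simp_all add: pre44 cyc_def swp_def lastto0_def)

lemma r44_251: "({3}, {0,1,2}) \<in> RS 4 4 (FL 4)"
  by (rule stepx[OF r44_237, of B]) (simp_all add: pre44 cyc_def swp_def lastto0_def)

lemma r44_252: "({0,1,2,3}, {0,1,2,3}) \<in> RS 4 4 (FL 4)"
  by (rule stepx[OF r44_241, of C]) (simp_all add: pre44 cyc_def swp_def lastto0_def)

lemma r44_253: "({0,1,2,3}, {0,1,2}) \<in> RS 4 4 (FL 4)"
  by (rule stepx[OF r44_242, of B]) (simp_all add: pre44 cyc_def swp_def lastto0_def)

lemma r44_254: "({3}, {0,1,2,3}) \<in> RS 4 4 (FL 4)"
  by (rule stepx[OF r44_244, of A]) (simp_all add: pre44 cyc_def swp_def lastto0_def)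

lemma r44_255: "({}, {0,1,2,3}) \<in> RS 4 4 (FL 4)"
  by (rule stepx[OF r44_250, of C]) (simp_all add: pre44 cyc_def swp_def lastto0_def)

lemmas r44 = r44_0 r44_1 r44_2 r44_3 r44_4 r44_5 r44_6 r44_7 r44_8 r44_9 r44_10 r44_11 r44_12 r44_13 r44_14 r44_15 r44_16 r44_17 r44_18 r44_19 r44_20 r44_21 r44_22 r44_23 r44_24 r44_25 r44_26 r44_27 r44_28 r44_29 r44_30 r44_31 r44_32 r44_33 r44_34 r44_35 r44_36 r44_37 r44_38 r44_39 r44_40 r44_41 r44_42 r44_43 r44_44 r44_45 r44_46 r44_47 r44_48 r44_49 r44_50 r44_51 r44_52 r44_53 r44_54 r44_55 r44_56 r44_57 r44_58 r44_59 r44_60 r44_61 r44_62 r44_63 r44_64 r44_65 r44_66 r44_67 r44_68 r44_69 r44_70 r44_71 r44_72 r44_73 r44_74 r44_75 r44_76 r44_77 r44_78 r44_79 r44_80 r44_81 r44_82 r44_83 r44_84 r44_85 r44_86 r44_87 r44_88 r44_89 r44_90 r44_91 r44_92 r44_93 r44_94 r44_95 r44_96 r44_97 r44_98 r44_99 r44_100 r44_101 r44_102 r44_103 r44_104 r44_105 r44_106 r44_107 r44_108 r44_109 r44_110 r44_111 r44_112 r44_113 r44_114 r44_115 r44_116 r44_117 r44_118 r44_119 r44_120 r44_121 r44_122 r44_123 r44_124 r44_125 r44_126 r44_127 r44_128 r44_129 r44_130 r44_131 r44_132 r44_133 r44_134 r44_135 r44_136 r44_137 r44_138 r44_139 r44_140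 r44_141 r44_142 r44_143 r44_144 r44_145 r44_146 r44_147 r44_148 r44_149 r44_150 r44_151 r44_152 r44_153 r44_154 r44_155 r44_156 r44_157 r44_158 r44_159 r44_160 r44_161 r44_162 r44_163 r44_164 r44_165 r44_166 r44_167 r44_168 r44_169 r44_170 r44_171 r44_172 r44_173 r44_174 r44_175 r44_176 r44_177 r44_178 r44_179 r44_180 r44_181 r44_182 r44_183 r44_184 r44_185 r44_186 r44_187 r44_188 r44_189 r44_190 r44_191 r44_192 r44_193 r44_194 r44_195 r44_196 r44_197 r44_198 r44_199 r44_200 r44_201 r44_202 r44_203 r44_204 r44_205 r44_206 r44_207 r44_208 r44_209 r44_210 r44_211 r44_212 r44_213 r44_214 r44_215 r44_216 r44_217 r44_218 r44_219 r44_220 r44_221 r44_222 r44_223 r44_224 r44_225 r44_226 r44_227 r44_228 r44_229 r44_230 r44_231 r44_232 r44_233 r44_234 r44_235 r44_236 r44_237 r44_238 r44_239 r44_240 r44_241 r44_242 r44_243 r44_244 r44_245 r44_246 r44_247 r44_248 r44_249 r44_250 r44_251 r44_252 r44_253 r44_254 r44_255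

lemma dec4: "S \<subseteq> {..<4} \<Longrightarrow> S = (if 0 \<in> S then {0} else {}) \<union> (if 1 \<in> S then {1} else {}) \<union> (if 2 \<in> S then {2} else {}) \<union> (if (3::nat) \<in> S then {3} else {})"
  by (auto simp: subset_iff lt4)

lemma reach44: "S \<subseteq> {..<4} \<Longrightarrow> T \<subseteq> {..<4} \<Longrightarrow> (S,T) \<in> RS 4 4 (FL 4)"
  apply (subst dec4[of S], assumption)
  apply (subst dec4[of T], assumption)
  apply (cases "0 \<in> S"; cases "1 \<in> S"; cases "2 \<in> S"; cases "3 \<in> S"; cases "0 \<in> T"; cases "1 \<in> T"; cases "2 \<in> T"; cases "3 \<in> T")
  apply (simp_all only: if_True if_False Un_empty_left Un_empty_right Un_insert_left r44)
  done


lemma reach_all: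
  assumes m: "3 \<le> m" and n: "3 \<le> n" and S: "S \<subseteq> {..<m}" and T: "T \<subseteq> {..<n}"
  shows "(S,T) \<in> RS m n (FL n)"
proof (cases "m = 4 \<and> n = 4")
  case True then show ?thesis using reach44 S T by auto
next
  case False then show ?thesis using reach_gen[OF m n False S T] by blast
qed

lemma fwd_reach:
  assumes m: "3 \<le> m" and n: "3 \<le> n" and p: "p < m" and q: "q < n"
  shows "\<exists>v. fK m v 0 = p \<and> fK n (map sw v) 0 = q"
proof -
  define R where "R p q \<longleftrightarrow> (\<exists>v. fK m v 0 = p \<and> fK n (map sw v) 0 = q)" for p q
  have Rx: "R p q \<Longrightarrow> R (U_abc m p x) (U_abc n q (sw x))" for p q x
  proof -
    assume "R p q"
    then obtain v where "fK m v 0 = p" "fK n (map sw v) 0 = q" by (auto simp: R_def)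
    then show ?thesis unfolding R_def by (intro exI[of _ "v @ [x]"]) simp
  qed
  have Ra: "R p q \<Longrightarrow> R ((p+1) mod m) (swp q)" for p q using Rx[of p q A] by (simp add: cyc_def)
  have Rb: "R p q \<Longrightarrow> R (swp p) ((q+1) mod n)" for p q using Rx[of p q B] by (simp add: cyc_def)
  have Rc: "R p q \<Longrightarrow> R (lastto0 m p) (lastto0 n q)" for p q using Rx[of p q C] by simp
  have R0: "R 0 0" unfolding R_def by (intro exI[of _ "[]"]) simp
  define par where "par k = (if even k then 0 else (1::nat))" for k :: nat
  have swp_par: "swp (par k) = par (Suc k)" for k by (simp add: par_def)
  have K1: "k < m \<Longrightarrow> R k (par k)" for k
  proof (induct k)
    case 0 then show ?case using R0 by (simp add: par_def)
  next
    case (Suc k) then show ?case using Ra[of k "par k"] swp_par by simp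
  qed
  have L1: "k < n \<Longrightarrow> R (par k) k" for k
  proof (induct k)
    case 0 then show ?case using R0 by (simp add: par_def)
  next
    case (Suc k) then show ?case using Rb[of "par k" k] swp_par by simp
  qed
  have Kj: "2 \<le> p \<Longrightarrow> p < m \<Longrightarrow> R p ((par p + j) mod n)" for p j
  proof (induct j)
    case 0 then show ?case using K1[of p] n by (simp add: par_def)
  next
    case (Suc j) then show ?case using Rb[of p "(par p + j) mod n"] by (simp add: mod_Suc_eq)
  qed
  have Lj: "2 \<le> q \<Longrightarrow> q < n \<Longrightarrow> R ((par q + j) mod m) q" for q j
  proof (induct j)
    case 0 then show ?case using L1[of q] m by (simp add: par_def)
  next
    case (Suc j) then show ?case using Ra[of "(par q + j) mod m" q] by (simp add: mod_Suc_eq)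
  qed
  have pbig: "2 \<le> p \<Longrightarrow> p < m \<Longrightarrow> q < n \<Longrightarrow> R p q" for p q
  proof -
    assume a: "2 \<le> p" "p < m" "q < n"
    have "par p \<le> 1" by (simp add: par_def)
    then have "(par p + (q + n - par p)) mod n = q" using a n by simp
    then show ?thesis using Kj[OF a(1,2), of "q + n - par p"] by simp
  qed
  have qbig: "2 \<le> q \<Longrightarrow> q < n \<Longrightarrow> p < m \<Longrightarrow> R p q" for p q
  proof -
    assume a: "2 \<le> q" "q < n" "p < m"
    have "par q \<le> 1" by (simp add: par_def)
    then have "(par q + (p + m - par q)) mod m = p" using a m by simp
    then show ?thesis using Lj[OF a(1,2), of "p + m - par q"] by simp
  qed
  have "R p q"
  proof (cases "2 \<le> p")
    case True then show ?thesis using pbig p q by blast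
  next
    case p2: False
    show ?thesis
    proof (cases "2 \<le> q")
      case True then show ?thesis using qbig p q by blast
    next
      case q2: False
      consider "p = 0" "q = 0" | "p = 1" "q = 1" | "p = 1" "q = 0" | "p = 0" "q = 1" using p2 q2 by linarith
      then show ?thesis
      proof cases
        case 1 then show ?thesis using R0 by simp
      next
        case 2 then show ?thesis using Ra[OF R0] m by simp
      next
        case 3
        have "R 1 (n-1)" using qbig[of "n-1" 1] m n by simp
        moreover have "lastto0 m 1 = 1" "lastto0 n (n-1) = 0" using m n by (auto simp: lastto0_def)
        ultimately show ?thesis using Rc[of 1 "n-1"] 3 by simp
      next
        case 4
        have "R (m-1) 1" using pbig[of "m-1" 1] m n by simp
        moreover have "lastto0 m (m-1) = 0" "lastto0 n 1 = 1" using m n by (auto simp: lastto0_def)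
        ultimately show ?thesis using Rc[of "m-1" 1] 4 by simp
      qed
    qed
  qed
  then show ?thesis by (simp add: R_def)
qed


lemma foldl_in_Q: "is_dfa Q q0 d F \<Longrightarrow> q \<in> Q \<Longrightarrow> foldl d q w \<in> Q"
  by (induct w arbitrary: q) (auto simp: is_dfa_def)

lemma sc_eq:
  fixes X :: "sym list set" and \<sigma> :: "sym list \<Rightarrow> 'a" and tr :: "'a \<Rightarrow> sym \<Rightarrow> 'a" and acc :: "'a \<Rightarrow> bool"
  assumes fin: "finite (range \<sigma>)"
    and tr: "\<And>w x. \<sigma> (w @ [x]) = tr (\<sigma> w) x"
    and acc: "\<And>w. w \<in> X \<longleftrightarrow> acc (\<sigma> w)"
    and dis: "\<And>w1 w2. \<sigma> w1 \<noteq> \<sigma> w2 \<Longrightarrow> \<exists>z. (w1 @ z \<in> X) \<noteq> (w2 @ z \<in> X)"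
  shows "sc X = card (range \<sigma>)"
proof -
  define N where "N = card (range \<sigma>)"
  obtain h where h: "bij_betw h {0..<N} (range \<sigma>)" using ex_bij_betw_nat_finite[OF fin] N_def by blast
  define e where "e = inv_into {0..<N} h"
  have he: "h (e s) = s" if "s \<in> range \<sigma>" for s using bij_betw_inv_into_right[OF h that] by (simp add: e_def)
  have eN: "e s \<in> {0..<N}" if "s \<in> range \<sigma>" for s
    using that h unfolding e_def bij_betw_def by (metis inv_into_into)
  have hN: "h k \<in> range \<sigma>" if "k \<in> {0..<N}" for k using h that by (auto simp: bij_betw_def)
  define d where "d k x = e (tr (h k) x)" for k x
  define F where "F = {k \<in> {0..<N}. acc (h k)}"
  have run: "foldl d (e (\<sigma> [])) w = e (\<sigma> w)" for w
  proof (induct w rule: rev_induct)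
    case Nil then show ?case by simp
  next
    case (snoc x w)
    have "foldl d (e (\<sigma> [])) (w @ [x]) = d (e (\<sigma> w)) x" using snoc by simp
    also have "\<dots> = e (tr (\<sigma> w) x)" by (simp add: d_def he)
    also have "\<dots> = e (\<sigma> (w @ [x]))" by (simp add: tr)
    finally show ?case .
  qed
  have dfa: "is_dfa {0..<N} (e (\<sigma> [])) d F"
    unfolding is_dfa_def
  proof (intro conjI ballI allI)
    show "finite {0..<N}" by simp
    show "e (\<sigma> []) \<in> {0..<N}" using eN by simp
    show "F \<subseteq> {0..<N}" by (auto simp: F_def)
    fix k x assume k: "k \<in> {0..<N}"
    then obtain w where "h k = \<sigma> w" using hN by blast
    then show "d k x \<in> {0..<N}" using eN by (simp add: d_def tr[symmetric])
  qed
  have lang: "dfa_lang (e (\<sigma> [])) d F = X"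
  proof (rule set_eqI)
    fix w
    have "w \<in> dfa_lang (e (\<sigma> [])) d F \<longleftrightarrow> e (\<sigma> w) \<in> F" by (simp add: dfa_lang_def run)
    also have "\<dots> \<longleftrightarrow> acc (\<sigma> w)" using eN he by (simp add: F_def)
    finally show "w \<in> dfa_lang (e (\<sigma> [])) d F \<longleftrightarrow> w \<in> X" using acc by simp
  qed
  have ex: "\<exists>Q q0 d F. is_dfa Q q0 d F \<and> card Q = N \<and> dfa_lang q0 d F = X"
    using dfa lang by (intro exI[of _ "{0..<N}"] exI[of _ "e (\<sigma> [])"] exI[of _ d] exI[of _ F]) simp
  have low: "N \<le> card Q" if "is_dfa Q q0 d' F'" "dfa_lang q0 d' F' = X" for Q q0 d' F'
  proof -
    define rep where "rep s = (SOME w. \<sigma> w = s)" for s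
    have rep: "\<sigma> (rep s) = s" if "s \<in> range \<sigma>" for s
      using that unfolding rep_def by (metis (mono_tags, lifting) rangeE someI_ex)
    define \<phi> where "\<phi> s = foldl d' q0 (rep s)" for s
    have sub: "\<phi> ` range \<sigma> \<subseteq> Q" using foldl_in_Q[OF \<open>is_dfa Q q0 d' F'\<close>] \<open>is_dfa Q q0 d' F'\<close>
      by (auto simp: \<phi>_def is_dfa_def)
    have inj: "inj_on \<phi> (range \<sigma>)"
    proof (rule inj_onI)
      fix s1 s2 assume s: "s1 \<in> range \<sigma>" "s2 \<in> range \<sigma>" "\<phi> s1 = \<phi> s2"
      have "\<forall>z. (rep s1 @ z \<in> X) = (rep s2 @ z \<in> X)"
        using s(3) \<open>dfa_lang q0 d' F' = X\<close> by (auto simp: dfa_lang_def \<phi>_def)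
      then have "\<sigma> (rep s1) = \<sigma> (rep s2)" using dis by blast
      then show "s1 = s2" using rep s by simp
    qed
    have "finite Q" using \<open>is_dfa Q q0 d' F'\<close> by (simp add: is_dfa_def)
    then show ?thesis using card_inj_on_le[OF inj sub] by (simp add: N_def)
  qed
  show ?thesis unfolding sc_def N_def[symmetric]
  proof (rule Least_equality)
    show "\<exists>Q q0 d F. is_dfa Q q0 d F \<and> card Q = N \<and> dfa_lang q0 d F = X" by (rule ex)
    show "\<And>y. \<exists>Q q0 d F. is_dfa Q q0 d F \<and> card Q = y \<and> dfa_lang q0 d F = X \<Longrightarrow> N \<le> y"
      using low by blast
  qed
qed


definition Fop :: "(bool \<Rightarrow> bool \<Rightarrow> bool) \<Rightarrow> nat \<Rightarrow> nat \<Rightarrow> nat set \<Rightarrow> nat set \<Rightarrow> nat \<times> nat \<Rightarrow> bool" where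
  "Fop op m n S T = (\<lambda>pq. fst pq < m \<and> snd pq < n \<and> op (fst pq \<in> S) (snd pq \<in> T))"

lemma sc_op:
  assumes m: "3 \<le> m" and n: "3 \<le> n"
  shows "sc {w. op (fK m (rev w) 0 \<in> {0,2}) (fK n (map sw (rev w)) 0 \<in> FL n)}
         = card ((\<lambda>(S,T). Fop op m n S T) ` (Pow {..<m} \<times> Pow {..<n}))"
proof -
  define X where "X = {w. op (fK m (rev w) 0 \<in> {0,2}) (fK n (map sw (rev w)) 0 \<in> FL n)}"
  define \<sigma> where "\<sigma> w = Fop op m n (pre m (rev w) {0,2}) (pre n (map sw (rev w)) (FL n))" for w
  define tr where "tr f x = (\<lambda>pq. fst pq < m \<and> snd pq < n \<and> f (U_abc m (fst pq) x, U_abc n (snd pq) (sw x)))"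
    for f :: "nat \<times> nat \<Rightarrow> bool" and x
  have rng: "range \<sigma> = (\<lambda>(S,T). Fop op m n S T) ` (Pow {..<m} \<times> Pow {..<n})"
  proof
    show "range \<sigma> \<subseteq> (\<lambda>(S,T). Fop op m n S T) ` (Pow {..<m} \<times> Pow {..<n})"
      using pre_sub unfolding \<sigma>_def by fastforce
    show "(\<lambda>(S,T). Fop op m n S T) ` (Pow {..<m} \<times> Pow {..<n}) \<subseteq> range \<sigma>"
    proof
      fix f assume "f \<in> (\<lambda>(S,T). Fop op m n S T) ` (Pow {..<m} \<times> Pow {..<n})"
      then obtain S T where ST: "S \<subseteq> {..<m}" "T \<subseteq> {..<n}" "f = Fop op m n S T" by auto
      have "(S,T) \<in> RS m n (FL n)" using reach_all[OF m n ST(1,2)] .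
      then obtain v where v: "S = pre m v {0,2}" "T = pre n (map sw v) (FL n)" by (auto simp: RS_def)
      have "f = \<sigma> (rev v)" using v ST(3) by (simp add: \<sigma>_def)
      then show "f \<in> range \<sigma>" by simp
    qed
  qed
  have fin: "finite (range \<sigma>)" unfolding rng by simp
  have trs: "\<sigma> (w @ [x]) = tr (\<sigma> w) x" for w x
  proof
    fix pq :: "nat \<times> nat"
    obtain p q where pq: "pq = (p,q)" by fastforce
    show "\<sigma> (w @ [x]) pq = tr (\<sigma> w) x pq"
      using U_lt[of p m x] U_lt[of q n "sw x"] m n
      by (auto simp: pq \<sigma>_def tr_def Fop_def pre_def)
  qed
  have accs: "w \<in> X \<longleftrightarrow> \<sigma> w (0,0)" for w
    using m n by (simp add: X_def \<sigma>_def Fop_def pre_def)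
  have dis: "\<exists>z. (w1 @ z \<in> X) \<noteq> (w2 @ z \<in> X)" if ne: "\<sigma> w1 \<noteq> \<sigma> w2" for w1 w2
  proof -
    obtain pq where "\<sigma> w1 pq \<noteq> \<sigma> w2 pq" using ne by (auto simp: fun_eq_iff)
    moreover obtain p q where pq: "pq = (p,q)" by fastforce
    ultimately have d: "\<sigma> w1 (p,q) \<noteq> \<sigma> w2 (p,q)" by simp
    then have p: "p < m" and q: "q < n" by (auto simp: \<sigma>_def Fop_def)
    obtain v where v: "fK m v 0 = p" "fK n (map sw v) 0 = q" using fwd_reach[OF m n p q] by blast
    have key: "w @ rev v \<in> X \<longleftrightarrow> \<sigma> w (p,q)" for w
      using v p q by (simp add: X_def \<sigma>_def Fop_def pre_def)
    show ?thesis using d key by (intro exI[of _ "rev v"]) auto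
  qed
  have "sc X = card (range \<sigma>)" using sc_eq[OF fin trs, of X "\<lambda>f. f (0,0)"] accs dis by blast
  then show ?thesis unfolding rng X_def by simp
qed


lemma card_img_eq: "f ` U = f ` V \<Longrightarrow> inj_on f V \<Longrightarrow> card (f ` U) = card V"
  by (simp add: card_image)

lemma Fop_eq: "Fop op m n S T = Fop op m n S' T' \<longleftrightarrow> (\<forall>p q. p < m \<longrightarrow> q < n \<longrightarrow> op (p \<in> S) (q \<in> T) = op (p \<in> S') (q \<in> T'))"
  unfolding Fop_def fun_eq_iff by auto

lemma card_Pow_minus: "card (Pow {..<k} - {X}) = 2^k - 1" if "X \<subseteq> {..<k}"
  using that by (simp add: card_Diff_singleton card_Pow)

lemma card_union:
  assumes m: "3 \<le> m" and n: "3 \<le> n"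
  shows "card ((\<lambda>(S,T). Fop (\<or>) m n S T) ` (Pow {..<m} \<times> Pow {..<n})) = (2^m - 1) * (2^n - 1) + 1"
proof -
  define M where "M = {..<m}"
  define N where "N = {..<n}"
  define Qc where "Qc = ((Pow M - {M}) \<times> (Pow N - {N})) \<union> {(M,N)}"
  let ?f = "\<lambda>(S,T). Fop (\<or>) m n S T"
  have img: "?f ` (Pow M \<times> Pow N) = ?f ` Qc"
  proof
    show "?f ` Qc \<subseteq> ?f ` (Pow M \<times> Pow N)" by (auto simp: Qc_def)
    show "?f ` (Pow M \<times> Pow N) \<subseteq> ?f ` Qc"
    proof
      fix x assume "x \<in> ?f ` (Pow M \<times> Pow N)"
      then obtain S T where ST: "S \<subseteq> M" "T \<subseteq> N" "x = Fop (\<or>) m n S T" by auto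
      show "x \<in> ?f ` Qc"
      proof (cases "S = M \<or> T = N")
        case True
        then have "x = Fop (\<or>) m n M N" using ST by (auto simp: Fop_eq M_def N_def)
        then show ?thesis by (force simp: Qc_def)
      next
        case False
        then show ?thesis using ST by (force simp: Qc_def)
      qed
    qed
  qed
  have inj: "inj_on ?f Qc"
  proof (rule inj_onI)
    fix x y assume x: "x \<in> Qc" and y: "y \<in> Qc" and e: "?f x = ?f y"
    obtain S1 T1 where x': "x = (S1,T1)" by fastforce
    obtain S2 T2 where y': "y = (S2,T2)" by fastforce
    have E: "\<And>p q. p < m \<Longrightarrow> q < n \<Longrightarrow> (p \<in> S1 \<or> q \<in> T1) = (p \<in> S2 \<or> q \<in> T2)"
      using e by (simp add: x' y' Fop_eq)
    have nf: "\<exists>p<m. p \<notin> S" if "S \<subseteq> M" "S \<noteq> M" for S using that by (auto simp: M_def)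
    have nfT: "\<exists>q<n. q \<notin> T" if "T \<subseteq> N" "T \<noteq> N" for T using that by (auto simp: N_def)
    show "x = y"
    proof (cases "x = (M,N)"; cases "y = (M,N)")
      assume "x = (M,N)" "y = (M,N)" then show ?thesis by simp
    next
      assume a: "x = (M,N)" "y \<noteq> (M,N)"
      then have "S2 \<subseteq> M" "S2 \<noteq> M" "T2 \<subseteq> N" "T2 \<noteq> N" using y by (auto simp: Qc_def y')
      then obtain p q where "p < m" "p \<notin> S2" "q < n" "q \<notin> T2" using nf nfT by meson
      then show ?thesis using E[of p q] a by (simp add: x' M_def N_def)
    next
      assume a: "x \<noteq> (M,N)" "y = (M,N)"
      then have "S1 \<subseteq> M" "S1 \<noteq> M" "T1 \<subseteq> N" "T1 \<noteq> N" using x by (auto simp: Qc_def x')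
      then obtain p q where "p < m" "p \<notin> S1" "q < n" "q \<notin> T1" using nf nfT by meson
      then show ?thesis using E[of p q] a by (simp add: y' M_def N_def)
    next
      assume a: "x \<noteq> (M,N)" "y \<noteq> (M,N)"
      then have s: "S1 \<subseteq> M" "S1 \<noteq> M" "T1 \<subseteq> N" "T1 \<noteq> N" "S2 \<subseteq> M" "S2 \<noteq> M" "T2 \<subseteq> N" "T2 \<noteq> N"
        using x y by (auto simp: Qc_def x' y')
      obtain p1 where "p1 < m" "p1 \<notin> S1" using nf[OF s(1,2)] by blast
      moreover obtain q1 where "q1 < n" "q1 \<notin> T1" using nfT[OF s(3,4)] by blast
      ultimately have 1: "p1 < m" "p1 \<notin> S1" "q1 < n" "q1 \<notin> T1" by auto
      obtain p2 where "p2 < m" "p2 \<notin> S2" using nf[OF s(5,6)] by blast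
      moreover obtain q2 where "q2 < n" "q2 \<notin> T2" using nfT[OF s(7,8)] by blast
      ultimately have 2: "p2 < m" "p2 \<notin> S2" "q2 < n" "q2 \<notin> T2" by auto
      have "S1 = S2"
      proof
        show "S1 \<subseteq> S2"
        proof
          fix p assume p: "p \<in> S1"
          then have "p < m" using s(1) by (auto simp: M_def)
          then show "p \<in> S2" using E[of p q2] 2 p by blast
        qed
        show "S2 \<subseteq> S1"
        proof
          fix p assume p: "p \<in> S2"
          then have "p < m" using s(5) by (auto simp: M_def)
          then show "p \<in> S1" using E[of p q1] 1 p by blast
        qed
      qed
      moreover have "T1 = T2"
      proof
        show "T1 \<subseteq> T2"
        proof
          fix q assume q: "q \<in> T1"
          then have "q < n" using s(3) by (auto simp: N_def)
          then show "q \<in> T2" using E[of p2 q] 2 q by blast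
        qed
        show "T2 \<subseteq> T1"
        proof
          fix q assume q: "q \<in> T2"
          then have "q < n" using s(7) by (auto simp: N_def)
          then show "q \<in> T1" using E[of p1 q] 1 q by blast
        qed
      qed
      ultimately show ?thesis by (simp add: x' y')
    qed
  qed
  have "card Qc = (2^m - 1) * (2^n - 1) + 1"
  proof -
    have "(M,N) \<notin> (Pow M - {M}) \<times> (Pow N - {N})" by simp
    moreover have "card ((Pow M - {M}) \<times> (Pow N - {N})) = (2^m - 1) * (2^n - 1)"
      by (simp add: card_cartesian_product card_Pow_minus M_def N_def card_Pow)
    moreover have "finite ((Pow M - {M}) \<times> (Pow N - {N}))" by (simp add: M_def N_def)
    ultimately show ?thesis by (simp add: Qc_def)
  qed
  then show ?thesis using card_img_eq[OF img inj] by (simp add: M_def N_def)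
qed


lemma card_inter:
  assumes m: "3 \<le> m" and n: "3 \<le> n"
  shows "card ((\<lambda>(S,T). Fop (\<and>) m n S T) ` (Pow {..<m} \<times> Pow {..<n})) = (2^m - 1) * (2^n - 1) + 1"
proof -
  define M where "M = {..<m}"
  define N where "N = {..<n}"
  define Qc where "Qc = ((Pow M - {{}}) \<times> (Pow N - {{}})) \<union> {({},{})}"
  let ?f = "\<lambda>(S,T). Fop (\<and>) m n S T"
  have img: "?f ` (Pow M \<times> Pow N) = ?f ` Qc"
  proof
    show "?f ` Qc \<subseteq> ?f ` (Pow M \<times> Pow N)" by (auto simp: Qc_def)
    show "?f ` (Pow M \<times> Pow N) \<subseteq> ?f ` Qc"
    proof
      fix x assume "x \<in> ?f ` (Pow M \<times> Pow N)"
      then obtain S T where ST: "S \<subseteq> M" "T \<subseteq> N" "x = Fop (\<and>) m n S T" by auto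
      show "x \<in> ?f ` Qc"
      proof (cases "S = {} \<or> T = {}")
        case True
        then have "x = Fop (\<and>) m n {} {}" using ST by (auto simp: Fop_eq)
        then show ?thesis by (force simp: Qc_def)
      next
        case False
        then show ?thesis using ST by (force simp: Qc_def)
      qed
    qed
  qed
  have inj: "inj_on ?f Qc"
  proof (rule inj_onI)
    fix x y assume x: "x \<in> Qc" and y: "y \<in> Qc" and e: "?f x = ?f y"
    obtain S1 T1 where x': "x = (S1,T1)" by fastforce
    obtain S2 T2 where y': "y = (S2,T2)" by fastforce
    have E: "\<And>p q. p < m \<Longrightarrow> q < n \<Longrightarrow> (p \<in> S1 \<and> q \<in> T1) = (p \<in> S2 \<and> q \<in> T2)"
      using e by (simp add: x' y' Fop_eq)
    have ne: "\<exists>p. p \<in> S" if "S \<noteq> {}" for S :: "nat set" using that by auto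
    show "x = y"
    proof (cases "x = ({},{})"; cases "y = ({},{})")
      assume "x = ({},{})" "y = ({},{})" then show ?thesis by simp
    next
      assume a: "x = ({},{})" "y \<noteq> ({},{})"
      then have "S2 \<subseteq> M" "S2 \<noteq> {}" "T2 \<subseteq> N" "T2 \<noteq> {}" using y by (auto simp: Qc_def y')
      then obtain p q where "p \<in> S2" "q \<in> T2" "p < m" "q < n" by (auto simp: M_def N_def)
      then show ?thesis using E[of p q] a by (simp add: x')
    next
      assume a: "x \<noteq> ({},{})" "y = ({},{})"
      then have "S1 \<subseteq> M" "S1 \<noteq> {}" "T1 \<subseteq> N" "T1 \<noteq> {}" using x by (auto simp: Qc_def x')
      then obtain p q where "p \<in> S1" "q \<in> T1" "p < m" "q < n" by (auto simp: M_def N_def)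
      then show ?thesis using E[of p q] a by (simp add: y')
    next
      assume a: "x \<noteq> ({},{})" "y \<noteq> ({},{})"
      then have s: "S1 \<subseteq> M" "S1 \<noteq> {}" "T1 \<subseteq> N" "T1 \<noteq> {}" "S2 \<subseteq> M" "S2 \<noteq> {}" "T2 \<subseteq> N" "T2 \<noteq> {}"
        using x y by (auto simp: Qc_def x' y')
      obtain p1 where "p1 \<in> S1" using s(2) by blast
      moreover obtain q1 where "q1 \<in> T1" using s(4) by blast
      ultimately have 1: "p1 \<in> S1" "q1 \<in> T1" "p1 < m" "q1 < n" using s by (auto simp: M_def N_def)
      obtain p2 where "p2 \<in> S2" using s(6) by blast
      moreover obtain q2 where "q2 \<in> T2" using s(8) by blast
      ultimately have 2: "p2 \<in> S2" "q2 \<in> T2" "p2 < m" "q2 < n" using s by (auto simp: M_def N_def)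
      have "S1 = S2"
      proof
        show "S1 \<subseteq> S2"
        proof
          fix p assume p: "p \<in> S1"
          then have "p < m" using s(1) by (auto simp: M_def)
          then show "p \<in> S2" using E[of p q1] 1 p by blast
        qed
        show "S2 \<subseteq> S1"
        proof
          fix p assume p: "p \<in> S2"
          then have "p < m" using s(5) by (auto simp: M_def)
          then show "p \<in> S1" using E[of p q2] 2 p by blast
        qed
      qed
      moreover have "T1 = T2"
      proof
        show "T1 \<subseteq> T2"
        proof
          fix q assume q: "q \<in> T1"
          then have "q < n" using s(3) by (auto simp: N_def)
          then show "q \<in> T2" using E[of p1 q] 1 q by blast
        qed
        show "T2 \<subseteq> T1"
        proof
          fix q assume q: "q \<in> T2"
          then have "q < n" using s(7) by (auto simp: N_def)
          then show "q \<in> T1" using E[of p2 q] 2 q by blast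
        qed
      qed
      ultimately show ?thesis by (simp add: x' y')
    qed
  qed
  have "card Qc = (2^m - 1) * (2^n - 1) + 1"
  proof -
    have "({},{}) \<notin> (Pow M - {{}}) \<times> (Pow N - {{}})" by simp
    moreover have "card ((Pow M - {{}}) \<times> (Pow N - {{}})) = (2^m - 1) * (2^n - 1)"
      by (simp add: card_cartesian_product card_Pow_minus M_def N_def card_Pow)
    moreover have "finite ((Pow M - {{}}) \<times> (Pow N - {{}}))" by (simp add: M_def N_def)
    ultimately show ?thesis by (simp add: Qc_def)
  qed
  then show ?thesis using card_img_eq[OF img inj] by (simp add: M_def N_def)
qed

lemma card_diff:
  assumes m: "3 \<le> m" and n: "3 \<le> n"
  shows "card ((\<lambda>(S,T). Fop (\<lambda>a b. a \<and> \<not> b) m n S T) ` (Pow {..<m} \<times> Pow {..<n})) = (2^m - 1) * (2^n - 1) + 1"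
proof -
  define M where "M = {..<m}"
  define N where "N = {..<n}"
  define Qc where "Qc = ((Pow M - {{}}) \<times> (Pow N - {N})) \<union> {({},{})}"
  let ?f = "\<lambda>(S,T). Fop (\<lambda>a b. a \<and> \<not> b) m n S T"
  have img: "?f ` (Pow M \<times> Pow N) = ?f ` Qc"
  proof
    show "?f ` Qc \<subseteq> ?f ` (Pow M \<times> Pow N)" by (auto simp: Qc_def)
    show "?f ` (Pow M \<times> Pow N) \<subseteq> ?f ` Qc"
    proof
      fix x assume "x \<in> ?f ` (Pow M \<times> Pow N)"
      then obtain S T where ST: "S \<subseteq> M" "T \<subseteq> N" "x = Fop (\<lambda>a b. a \<and> \<not> b) m n S T" by auto
      show "x \<in> ?f ` Qc"
      proof (cases "S = {} \<or> T = N")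
        case True
        then have "x = Fop (\<lambda>a b. a \<and> \<not> b) m n {} {}" using ST by (auto simp: Fop_eq N_def)
        then show ?thesis by (force simp: Qc_def)
      next
        case False
        then show ?thesis using ST by (force simp: Qc_def)
      qed
    qed
  qed
  have inj: "inj_on ?f Qc"
  proof (rule inj_onI)
    fix x y assume x: "x \<in> Qc" and y: "y \<in> Qc" and e: "?f x = ?f y"
    obtain S1 T1 where x': "x = (S1,T1)" by fastforce
    obtain S2 T2 where y': "y = (S2,T2)" by fastforce
    have E: "\<And>p q. p < m \<Longrightarrow> q < n \<Longrightarrow> (p \<in> S1 \<and> q \<notin> T1) = (p \<in> S2 \<and> q \<notin> T2)"
      using e by (simp add: x' y' Fop_eq)
    have nfT: "\<exists>q<n. q \<notin> T" if "T \<subseteq> N" "T \<noteq> N" for T using that by (auto simp: N_def)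
    show "x = y"
    proof (cases "x = ({},{})"; cases "y = ({},{})")
      assume "x = ({},{})" "y = ({},{})" then show ?thesis by simp
    next
      assume a: "x = ({},{})" "y \<noteq> ({},{})"
      then have s: "S2 \<subseteq> M" "S2 \<noteq> {}" "T2 \<subseteq> N" "T2 \<noteq> N" using y by (auto simp: Qc_def y')
      obtain p where "p \<in> S2" using s(2) by blast
      moreover obtain q where "q < n" "q \<notin> T2" using nfT[OF s(3,4)] by blast
      ultimately show ?thesis using E[of p q] a s(1) by (auto simp: x' M_def)
    next
      assume a: "x \<noteq> ({},{})" "y = ({},{})"
      then have s: "S1 \<subseteq> M" "S1 \<noteq> {}" "T1 \<subseteq> N" "T1 \<noteq> N" using x by (auto simp: Qc_def x')
      obtain p where "p \<in> S1" using s(2) by blast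
      moreover obtain q where "q < n" "q \<notin> T1" using nfT[OF s(3,4)] by blast
      ultimately show ?thesis using E[of p q] a s(1) by (auto simp: y' M_def)
    next
      assume a: "x \<noteq> ({},{})" "y \<noteq> ({},{})"
      then have s: "S1 \<subseteq> M" "S1 \<noteq> {}" "T1 \<subseteq> N" "T1 \<noteq> N" "S2 \<subseteq> M" "S2 \<noteq> {}" "T2 \<subseteq> N" "T2 \<noteq> N"
        using x y by (auto simp: Qc_def x' y')
      obtain p1 where p1: "p1 \<in> S1" using s(2) by blast
      obtain q1 where q1: "q1 < n" "q1 \<notin> T1" using nfT[OF s(3,4)] by blast
      obtain q2 where q2: "q2 < n" "q2 \<notin> T2" using nfT[OF s(7,8)] by blast
      have p1m: "p1 < m" using p1 s(1) by (auto simp: M_def)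
      have SS: "S1 = S2"
      proof
        show "S1 \<subseteq> S2"
        proof
          fix p assume p: "p \<in> S1"
          then have "p < m" using s(1) by (auto simp: M_def)
          then show "p \<in> S2" using E[of p q1] q1 p by blast
        qed
        show "S2 \<subseteq> S1"
        proof
          fix p assume p: "p \<in> S2"
          then have "p < m" using s(5) by (auto simp: M_def)
          then show "p \<in> S1" using E[of p q2] q2 p by blast
        qed
      qed
      have "T1 = T2"
      proof
        show "T1 \<subseteq> T2"
        proof
          fix q assume q: "q \<in> T1"
          then have "q < n" using s(3) by (auto simp: N_def)
          then show "q \<in> T2" using E[of p1 q] p1 p1m SS q by blast
        qed
        show "T2 \<subseteq> T1"
        proof
          fix q assume q: "q \<in> T2"
          then have "q < n" using s(7) by (auto simp: N_def)
          then show "q \<in> T1" using E[of p1 q] p1 p1m SS q by blast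
        qed
      qed
      then show ?thesis using SS by (simp add: x' y')
    qed
  qed
  have "card Qc = (2^m - 1) * (2^n - 1) + 1"
  proof -
    have "({},{}) \<notin> (Pow M - {{}}) \<times> (Pow N - {N})" by simp
    moreover have "card ((Pow M - {{}}) \<times> (Pow N - {N})) = (2^m - 1) * (2^n - 1)"
      by (simp add: card_cartesian_product card_Pow_minus M_def N_def card_Pow)
    moreover have "finite ((Pow M - {{}}) \<times> (Pow N - {N}))" by (simp add: M_def N_def)
    ultimately show ?thesis by (simp add: Qc_def)
  qed
  then show ?thesis using card_img_eq[OF img inj] by (simp add: M_def N_def)
qed

lemma card_symdiff:
  assumes m: "3 \<le> m" and n: "3 \<le> n"
  shows "card ((\<lambda>(S,T). Fop (\<noteq>) m n S T) ` (Pow {..<m} \<times> Pow {..<n})) = 2 ^ (m + n - 1)"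
proof -
  define M where "M = {..<m}"
  define N where "N = {..<n}"
  define Qc where "Qc = Pow (M - {0}) \<times> Pow N"
  let ?f = "\<lambda>(S,T). Fop (\<noteq>) m n S T"
  have img: "?f ` (Pow M \<times> Pow N) = ?f ` Qc"
  proof
    show "?f ` Qc \<subseteq> ?f ` (Pow M \<times> Pow N)" by (auto simp: Qc_def)
    show "?f ` (Pow M \<times> Pow N) \<subseteq> ?f ` Qc"
    proof
      fix x assume "x \<in> ?f ` (Pow M \<times> Pow N)"
      then obtain S T where ST: "S \<subseteq> M" "T \<subseteq> N" "x = Fop (\<noteq>) m n S T" by auto
      show "x \<in> ?f ` Qc"
      proof (cases "0 \<in> S")
        case True
        then have "x = Fop (\<noteq>) m n (M - S) (N - T)" using ST by (auto simp: Fop_eq M_def N_def)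
        moreover have "(M - S, N - T) \<in> Qc" using True by (auto simp: Qc_def)
        ultimately show ?thesis by force
      next
        case False
        then show ?thesis using ST by (force simp: Qc_def)
      qed
    qed
  qed
  have inj: "inj_on ?f Qc"
  proof (rule inj_onI)
    fix x y assume x: "x \<in> Qc" and y: "y \<in> Qc" and e: "?f x = ?f y"
    obtain S1 T1 where x': "x = (S1,T1)" by fastforce
    obtain S2 T2 where y': "y = (S2,T2)" by fastforce
    have E: "\<And>p q. p < m \<Longrightarrow> q < n \<Longrightarrow> ((p \<in> S1) \<noteq> (q \<in> T1)) = ((p \<in> S2) \<noteq> (q \<in> T2))"
      using e by (simp add: x' y' Fop_eq)
    have s: "S1 \<subseteq> M" "0 \<notin> S1" "T1 \<subseteq> N" "S2 \<subseteq> M" "0 \<notin> S2" "T2 \<subseteq> N"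
      using x y by (auto simp: Qc_def x' y')
    have TT: "T1 = T2"
    proof
      show "T1 \<subseteq> T2"
      proof
        fix q assume q: "q \<in> T1"
        then have "q < n" using s(3) by (auto simp: N_def)
        then show "q \<in> T2" using E[of 0 q] m s q by auto
      qed
      show "T2 \<subseteq> T1"
      proof
        fix q assume q: "q \<in> T2"
        then have "q < n" using s(6) by (auto simp: N_def)
        then show "q \<in> T1" using E[of 0 q] m s q by auto
      qed
    qed
    have "S1 = S2"
    proof
      show "S1 \<subseteq> S2"
      proof
        fix p assume p: "p \<in> S1"
        then have "p < m" using s(1) by (auto simp: M_def)
        then show "p \<in> S2" using E[of p 0] n TT p by auto
      qed
      show "S2 \<subseteq> S1"
      proof
        fix p assume p: "p \<in> S2"
        then have "p < m" using s(4) by (auto simp: M_def)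
        then show "p \<in> S1" using E[of p 0] n TT p by auto
      qed
    qed
    then show "x = y" using TT by (simp add: x' y')
  qed
  have "card Qc = 2 ^ (m + n - 1)"
  proof -
    have "card (M - {0}) = m - 1" using m by (simp add: M_def)
    then have "card Qc = 2 ^ (m - 1) * 2 ^ n" by (simp add: Qc_def card_cartesian_product card_Pow M_def N_def)
    also have "\<dots> = 2 ^ (m + n - 1)" using m by (simp add: power_add[symmetric])
    finally show ?thesis .
  qed
  then show ?thesis using card_img_eq[OF img inj] by (simp add: M_def N_def)
qed


lemma rev_img: "rev ` {w. P w} = {w. P (rev w)}"
proof
  show "rev ` {w. P w} \<subseteq> {w. P (rev w)}" by auto
  show "{w. P (rev w)} \<subseteq> rev ` {w. P w}"
  proof
    fix w assume "w \<in> {w. P (rev w)}"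
    then have "rev w \<in> {w. P w}" by simp
    then show "w \<in> rev ` {w. P w}" by (metis image_eqI rev_rev_ident)
  qed
qed

theorem theorem3:
  fixes m n :: nat
  assumes "m \<ge> 3" and "n \<ge> 3"
  defines "K \<equiv> U_lang_abc {0, 2} m"
      and "L \<equiv> (if n \<ge> 4 then U_lang_bac {1, 3} n else U_lang_bac {1} n)"
  shows "sc (reversal K \<union> reversal L) = (2 ^ m - 1) * (2 ^ n - 1) + 1 \<and>
         sc (reversal K \<inter> reversal L) = (2 ^ m - 1) * (2 ^ n - 1) + 1 \<and>
         sc (reversal K - reversal L) = (2 ^ m - 1) * (2 ^ n - 1) + 1 \<and>
         sc (symdiff (reversal K) (reversal L)) = 2 ^ (m + n - 1)"
proof -
  have m: "3 \<le> m" and n: "3 \<le> n" using assms by auto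
  have rK: "reversal K = {w. fK m (rev w) 0 \<in> {0,2}}"
    unfolding K_def U_lang_abc_def dfa_lang_def reversal_def fK_def by (rule rev_img)
  have Ld: "L = dfa_lang 0 (U_bac n) (FL n)"
    unfolding L_def U_lang_bac_def FL_def by simp
  have rL: "reversal L = {w. fK n (map sw (rev w)) 0 \<in> FL n}"
    unfolding Ld dfa_lang_def reversal_def foldl_bac by (rule rev_img)
  have 1: "reversal K \<union> reversal L = {w. (fK m (rev w) 0 \<in> {0,2}) \<or> (fK n (map sw (rev w)) 0 \<in> FL n)}"
    unfolding rK rL by auto
  have 2: "reversal K \<inter> reversal L = {w. (fK m (rev w) 0 \<in> {0,2}) \<and> (fK n (map sw (rev w)) 0 \<in> FL n)}"
    unfolding rK rL by auto
  have 3: "reversal K - reversal L = {w. (\<lambda>a b. a \<and> \<not> b) (fK m (rev w) 0 \<in> {0,2}) (fK n (map sw (rev w)) 0 \<in> FL n)}"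
    unfolding rK rL by auto
  have 4: "symdiff (reversal K) (reversal L) = {w. (fK m (rev w) 0 \<in> {0,2}) \<noteq> (fK n (map sw (rev w)) 0 \<in> FL n)}"
    unfolding rK rL symdiff_def by auto
  show ?thesis
    using sc_op[OF m n, of "(\<or>)"] sc_op[OF m n, of "(\<and>)"] sc_op[OF m n, of "\<lambda>a b. a \<and> \<not> b"] sc_op[OF m n, of "(\<noteq>)"]
      card_union[OF m n] card_inter[OF m n] card_diff[OF m n] card_symdiff[OF m n]
    unfolding 1 2 3 4 by simp
qed


end
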